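(* Let $R$ be a finite commutative chain ring with maximal ideal $\langle a\rangle$, $a$ of nilpotency index $t$, residue field $\mathbb F_q$; let $t_i(X_i)$, $I$, $A$ be as in the context, let $\mathcal K$ be a semisimple code in $A$, and let $G_0,\dots,G_t\in R[X_1,\dots,X_r]$ be an admissible family for $\mathcal K$. Let $\mathcal L$ be the code $\langle\bar G_1,\dots,\bar G_t\rangle+\bar I$ in $\mathbb F_q[X_1,\dots,X_r]/\bar I$, where $\bar I=\langle\bar t_1(X_1),\dots,\bar t_r(X_r)\rangle$. Then $d(\mathcal K)=d(\mathcal L)$.
   Context: Bars denote reduction mod $\langle a\rangle$, coefficientwise on polynomials. For $i=1,\dots,r$, $t_i(X_i)\in R[X_i]$ is monic with $\bar t_i$ square-free; $I=\langle t_1(X_1),\dots,t_r(X_r)\rangle$, $A=R[X_1,\dots,X_r]/I$. A semisimple code is an ideal of $A$. $A$ is a free $R$-module with basis the monomials $X_1^{i_1}\cdots X_r^{i_r}$, $0\le i_k<\deg t_k$, and elements are identified with their coefficient vectors in $R^n$, $n=\prod_k\deg t_k$ (similarly for $\mathbb F_q[X_1,\dots,X_r]/\bar I$ over $\mathbb F_q$). The Hamming weight of a vector is its number of nonzero coordinates, and $d(\cdot)$ of a code is the minimum Hamming weight of its nonzero elements. An admissible family for $\mathcal K$ is a family $G_0,\dots,G_t$ of polynomials with $\bigcap_{i=0}^t\mathrm{Ann}_A\langle G_i+I\rangle=0$, $\mathrm{Ann}_A\langle G_i+I\rangle+\mathrm{Ann}_A\langle G_j+I\rangle=A$ for $i\ne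 j$, and $\mathcal K=\langle G_1,aG_2,\dots,a^{t-1}G_t\rangle+I$. *)

theory Defs
  imports "HOL-Library.Poly_Mapping" "HOL-Computational_Algebra.Polynomial"
          "HOL-Computational_Algebra.Squarefree"
begin

text \<open>Variable X_(k+1) of the paper is variable index k here (k < r).\<close>

type_synonym 'a mpoly = "(nat \<Rightarrow>\<^sub>0 nat) \<Rightarrow>\<^sub>0 'a"

definition mpolys :: "nat \<Rightarrow> 'a::zero mpoly set" where
  "mpolys r = {p. \<forall>m\<in>Poly_Mapping.keys p. Poly_Mapping.keys m \<subseteq> {..<r}}"

definition uni_to_mpoly :: "nat \<Rightarrow> 'a::comm_ring_1 poly \<Rightarrow> 'a mpoly" where
  "uni_to_mpoly k p = (\<Sum>j\<le>degree p. Poly_Mapping.single (Poly_Mapping.single k j) (coeff p j))"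

definition const_mpoly :: "'a::zero \<Rightarrow> 'a mpoly" where
  "const_mpoly c = Poly_Mapping.single 0 c"

definition ideal_I :: "nat \<Rightarrow> (nat \<Rightarrow> 'a::comm_ring_1 poly) \<Rightarrow> 'a mpoly set" where
  "ideal_I r ts = {\<Sum>k<r. h k * uni_to_mpoly k (ts k) | h. \<forall>k. h k \<in> mpolys r}"

text \<open>the ideal <gens 1, ..., gens t> + I (as a set of polynomials, i.e. the preimage
  of the corresponding ideal of the quotient ring)\<close>
definition gen_code :: "nat \<Rightarrow> (nat \<Rightarrow> 'a::comm_ring_1 poly) \<Rightarrow> nat \<Rightarrow> (nat \<Rightarrow> 'a mpoly) \<Rightarrow> 'a mpoly set" where
  "gen_code r ts t gens =
     {(\<Sum>i\<in>{1..t}. h i * gens i) + \<iota> | h \<iota>. (\<forall>i. h i \<in> mpolys r) \<and> \<iota> \<in> ideal_I r ts}"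

text \<open>Ann_A <G + I>, as a set of polynomials (preimage in R[X_1..X_r])\<close>
definition ann :: "nat \<Rightarrow> (nat \<Rightarrow> 'a::comm_ring_1 poly) \<Rightarrow> 'a mpoly \<Rightarrow> 'a mpoly set" where
  "ann r ts G = {f \<in> mpolys r. f * G \<in> ideal_I r ts}"

text \<open>reduced representatives: the monomials X_1^i_1...X_r^i_r with i_k < deg t_k;
  these form the standard basis of A, identifying A with R^n\<close>
definition reduced :: "nat \<Rightarrow> (nat \<Rightarrow> 'a::comm_ring_1 poly) \<Rightarrow> 'a mpoly \<Rightarrow> bool" where
  "reduced r ts p \<longleftrightarrow> (\<forall>m\<in>Poly_Mapping.keys p. Poly_Mapping.keys m \<subseteq> {..<r} \<and> (\<forall>k<r. Poly_Mapping.lookup m k < degree (ts k)))"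

definition hweight :: "'a::zero mpoly \<Rightarrow> nat" where
  "hweight p = card (Poly_Mapping.keys p)"

text \<open>minimum distance of the code C/I in A (convention: 0 for the zero code)\<close>
definition min_dist :: "nat \<Rightarrow> (nat \<Rightarrow> 'a::comm_ring_1 poly) \<Rightarrow> 'a mpoly set \<Rightarrow> nat" where
  "min_dist r ts C =
     (let W = {hweight p | p. p \<in> C \<and> p \<noteq> 0 \<and> reduced r ts p} in if W = {} then 0 else Min W)"

definition is_ideal :: "'a::comm_ring_1 set \<Rightarrow> bool" where
  "is_ideal S \<longleftrightarrow> 0 \<in> S \<and> (\<forall>x\<in>S. \<forall>y\<in>S. x + y \<in> S) \<and> (\<forall>x\<in>S. \<forall>y. y * x \<in> S)"

definition chain_ring :: "'a::comm_ring_1 itself \<Rightarrow> bool" where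
  "chain_ring _ \<longleftrightarrow> (\<forall>I J :: 'a set. is_ideal I \<and> is_ideal J \<longrightarrow> I \<subseteq> J \<or> J \<subseteq> I)"

definition principal :: "'a::comm_ring_1 \<Rightarrow> 'a set" where
  "principal a = {a * y | y. True}"

definition maximal_ideal :: "'a::comm_ring_1 set \<Rightarrow> bool" where
  "maximal_ideal M \<longleftrightarrow> is_ideal M \<and> M \<noteq> UNIV \<and>
     (\<forall>J. is_ideal J \<and> M \<subseteq> J \<longrightarrow> J = M \<or> J = UNIV)"

definition ring_hom_cl :: "('a::comm_ring_1 \<Rightarrow> 'b::comm_ring_1) \<Rightarrow> bool" where
  "ring_hom_cl f \<longleftrightarrow> f 1 = 1 \<and> (\<forall>x y. f (x + y) = f x + f y) \<and> (\<forall>x y. f (x * y) = f x * f y)"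

end

theory Submission
  imports Defs "HOL-Library.FuncSet"
begin

lemma lookup_map_z: "f 0 = 0 \<Longrightarrow> Poly_Mapping.lookup (Poly_Mapping.map f p) m = f (Poly_Mapping.lookup p m)"
  by (simp add: Poly_Mapping.map.rep_eq when_def)

lemma lookup_cm: "Poly_Mapping.lookup (const_mpoly c * p) m = (c::'a::comm_ring_1) * Poly_Mapping.lookup p m"
  unfolding const_mpoly_def mult_map_scale_conv_mult[symmetric] by (simp add: lookup_map_z)

lemma cm_mult: "const_mpoly (c::'a::comm_ring_1) * const_mpoly d = const_mpoly (c * d)"
  by (simp add: const_mpoly_def mult_single)

lemma cm_one[simp]: "const_mpoly (1::'a::comm_ring_1) = 1"
  by (simp add: const_mpoly_def)

lemma cm_zero[simp]: "const_mpoly (0::'a::comm_ring_1) = 0"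
  by (simp add: const_mpoly_def)

lemma cm_add: "const_mpoly ((c::'a::comm_ring_1) + d) = const_mpoly c + const_mpoly d"
  by (simp add: const_mpoly_def single_add)

lemma keys_cm: "Poly_Mapping.keys (const_mpoly (c::'a::comm_ring_1) * p) \<subseteq> Poly_Mapping.keys p"
  by (auto simp: in_keys_iff lookup_cm)

lemma mpoly_expand: "p = (\<Sum>m\<in>Poly_Mapping.keys p. Poly_Mapping.single m (Poly_Mapping.lookup p m))"
proof (rule poly_mapping_eqI)
  fix k
  show "Poly_Mapping.lookup p k = Poly_Mapping.lookup (\<Sum>m\<in>Poly_Mapping.keys p. Poly_Mapping.single m (Poly_Mapping.lookup p m)) k"
    by (cases "k \<in> Poly_Mapping.keys p") (auto simp: lookup_sum lookup_single when_def in_keys_iff)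
qed

lemma mpoly_expand_S: "finite S \<Longrightarrow> Poly_Mapping.keys p \<subseteq> S \<Longrightarrow>
   p = (\<Sum>m\<in>S. Poly_Mapping.single m (Poly_Mapping.lookup p m))"
  apply (subst mpoly_expand)
  apply (rule sum.mono_neutral_left)
    apply (auto simp: in_keys_iff)
  done

lemma single_as_cm: "Poly_Mapping.single m (c::'a::comm_ring_1) = const_mpoly c * Poly_Mapping.single m 1"
  by (simp add: const_mpoly_def mult_single)

lemma mpolys_iff: "p \<in> mpolys r \<longleftrightarrow> (\<forall>m\<in>Poly_Mapping.keys p. Poly_Mapping.keys m \<subseteq> {..<r})"
  by (simp add: mpolys_def)

lemma mpolys_0[simp]: "0 \<in> mpolys r" by (simp add: mpolys_def)
lemma mpolys_1[simp]: "(1::'a::comm_ring_1 mpoly) \<in> mpolys r" by (simp add: mpolys_def)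

lemma mpolys_add[simp]: "p \<in> mpolys r \<Longrightarrow> q \<in> mpolys r \<Longrightarrow> p + q \<in> mpolys r"
proof -
  assume A: "p \<in> mpolys r" "q \<in> mpolys r"
  show ?thesis unfolding mpolys_iff
  proof
    fix m assume "m \<in> Poly_Mapping.keys (p + q)"
    then have "m \<in> Poly_Mapping.keys p \<union> Poly_Mapping.keys q" using keys_add[of p q] by (rule subsetD[rotated])
    then show "Poly_Mapping.keys m \<subseteq> {..<r}" using A unfolding mpolys_iff by (elim UnE) auto
  qed
qed

lemma mpolys_uminus[simp]: "p \<in> mpolys r \<Longrightarrow> - (p::'a::comm_ring_1 mpoly) \<in> mpolys r"
  unfolding mpolys_def by simp

lemma mpolys_diff[simp]: "p \<in> mpolys r \<Longrightarrow> q \<in> mpolys r \<Longrightarrow> p - (q::'a::comm_ring_1 mpoly) \<in> mpolys r"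
  using mpolys_add[of p r "-q"] by simp

lemma mpolys_mult[simp]: "p \<in> mpolys r \<Longrightarrow> q \<in> mpolys r \<Longrightarrow> p * (q::'a::comm_ring_1 mpoly) \<in> mpolys r"
proof -
  assume A: "p \<in> mpolys r" "q \<in> mpolys r"
  show ?thesis unfolding mpolys_def mem_Collect_eq
  proof
    fix m assume "m \<in> Poly_Mapping.keys (p * q)"
    then obtain x y where "m = x + y" "x \<in> Poly_Mapping.keys p" "y \<in> Poly_Mapping.keys q"
      using keys_mult by blast
    then show "Poly_Mapping.keys m \<subseteq> {..<r}" using A keys_add[of x y] unfolding mpolys_def by blast
  qed
qed

lemma mpolys_cm[simp]: "const_mpoly (c::'a::comm_ring_1) \<in> mpolys r"
  by (simp add: mpolys_def const_mpoly_def)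

lemma mpolys_sum[simp]: "(\<And>i. i \<in> S \<Longrightarrow> f i \<in> mpolys r) \<Longrightarrow> sum f S \<in> mpolys r"
  by (induction S rule: infinite_finite_induct) auto

lemma mpolys_prod[simp]: "(\<And>i. i \<in> S \<Longrightarrow> f i \<in> mpolys r) \<Longrightarrow> (prod f S :: 'a::comm_ring_1 mpoly) \<in> mpolys r"
  by (induction S rule: infinite_finite_induct) auto

lemma mpolys_pow[simp]: "p \<in> mpolys r \<Longrightarrow> (p::'a::comm_ring_1 mpoly) ^ n \<in> mpolys r"
  by (induction n) auto

lemma mpolys_single: "Poly_Mapping.keys m \<subseteq> {..<r} \<Longrightarrow> Poly_Mapping.single m c \<in> mpolys r"
  by (simp add: mpolys_def)

lemma single_nat_inj[simp]: "Poly_Mapping.single k (j::nat) = Poly_Mapping.single k j' \<longleftrightarrow> j = j'"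
  by (metis lookup_single_eq)

lemma lookup_uni: "Poly_Mapping.lookup (uni_to_mpoly k p) m =
   (if m = Poly_Mapping.single k (Poly_Mapping.lookup m k) then coeff p (Poly_Mapping.lookup m k) else 0)"
proof -
  have "Poly_Mapping.lookup (uni_to_mpoly k p) m = (\<Sum>j\<le>degree p. (coeff p j when Poly_Mapping.single k j = m))"
    by (simp add: uni_to_mpoly_def lookup_sum lookup_single)
  also have "\<dots> = (if m = Poly_Mapping.single k (Poly_Mapping.lookup m k) then coeff p (Poly_Mapping.lookup m k) else 0)"
  proof (cases "m = Poly_Mapping.single k (Poly_Mapping.lookup m k)")
    case True
    define j0 where "j0 = Poly_Mapping.lookup m k"
    have eq: "(\<lambda>j. coeff p j when Poly_Mapping.single k j = m) = (\<lambda>j. if j = j0 then coeff p j else 0)"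
      using True j0_def by (auto simp: when_def fun_eq_iff)
    show ?thesis
      unfolding eq using True by (simp add: j0_def[symmetric] coeff_eq_0)
  next
    case False
    have "\<And>j. Poly_Mapping.single k j \<noteq> m" using False by (metis lookup_single_eq)
    then show ?thesis using False by simp
  qed
  finally show ?thesis .
qed

lemma uni_add: "uni_to_mpoly k (p + q) = uni_to_mpoly k p + uni_to_mpoly k q"
  by (rule poly_mapping_eqI) (simp add: lookup_uni lookup_add)

lemma uni_zero[simp]: "uni_to_mpoly k 0 = 0"
  by (rule poly_mapping_eqI) (simp add: lookup_uni)

lemma uni_smult: "uni_to_mpoly k (smult c p) = const_mpoly c * uni_to_mpoly k p"
  by (rule poly_mapping_eqI) (simp add: lookup_uni lookup_cm)

lemma uni_sum: "uni_to_mpoly k (sum f S) = (\<Sum>i\<in>S. uni_to_mpoly k (f i))"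
  by (induction S rule: infinite_finite_induct) (auto simp: uni_add)

lemma uni_monom: "uni_to_mpoly k (monom c j) = Poly_Mapping.single (Poly_Mapping.single k j) c"
  by (rule poly_mapping_eqI) (auto simp: lookup_uni lookup_single when_def coeff_monom)

lemma uni_mult: "uni_to_mpoly k (p * q) = uni_to_mpoly k p * uni_to_mpoly k (q::'a::comm_ring_1 poly)"
proof -
  have "uni_to_mpoly k (p * q) = uni_to_mpoly k ((\<Sum>i\<le>degree p. monom (coeff p i) i) * (\<Sum>j\<le>degree q. monom (coeff q j) j))"
    by (simp add: poly_as_sum_of_monoms)
  also have "\<dots> = (\<Sum>i\<le>degree p. \<Sum>j\<le>degree q. uni_to_mpoly k (monom (coeff p i) i) * uni_to_mpoly k (monom (coeff q j) j))"
    by (simp add: sum_product uni_sum mult_monom uni_monom mult_single single_add)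
  also have "\<dots> = uni_to_mpoly k p * uni_to_mpoly k q"
    by (simp add: sum_product[symmetric] uni_sum[symmetric] poly_as_sum_of_monoms)
  finally show ?thesis .
qed

lemma keys_uni: "m \<in> Poly_Mapping.keys (uni_to_mpoly k p) \<Longrightarrow>
   m = Poly_Mapping.single k (Poly_Mapping.lookup m k) \<and> coeff p (Poly_Mapping.lookup m k) \<noteq> 0"
  by (auto simp: in_keys_iff lookup_uni split: if_splits)

lemma uni_mpolys: "k < r \<Longrightarrow> uni_to_mpoly k p \<in> mpolys r"
  unfolding mpolys_def mem_Collect_eq
proof
  fix m assume "k < r" "m \<in> Poly_Mapping.keys (uni_to_mpoly k p)"
  then have "m = Poly_Mapping.single k (Poly_Mapping.lookup m k)" using keys_uni by blast
  then have "Poly_Mapping.keys m \<subseteq> {k}" by (metis keys_single empty_subsetI insert_subset order_refl)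
  then show "Poly_Mapping.keys m \<subseteq> {..<r}" using \<open>k < r\<close> by auto
qed

definition low :: "nat \<Rightarrow> 'a::zero poly \<Rightarrow> bool" where
  "low d p \<longleftrightarrow> (\<forall>i\<ge>d. coeff p i = 0)"

lemma low_0[simp]: "low d 0" by (simp add: low_def)
lemma low_add: "low d p \<Longrightarrow> low d q \<Longrightarrow> low d (p + q)" by (simp add: low_def)
lemma low_diff: "low d p \<Longrightarrow> low d q \<Longrightarrow> low d (p - (q::'a::comm_ring_1 poly))" by (simp add: low_def)
lemma low_smult: "low d p \<Longrightarrow> low d (smult c (p::'a::comm_ring_1 poly))" by (simp add: low_def)
lemma low_sum: "(\<And>i. i \<in> S \<Longrightarrow> low d (f i)) \<Longrightarrow> low d (sum f S)"
  by (induction S rule: infinite_finite_induct) (auto simp: low_add)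

lemma monic_div_exists:
  fixes T :: "'a::comm_ring_1 poly"
  assumes T: "lead_coeff T = 1"
  shows "\<exists>q r. p = q * T + r \<and> low (degree T) r"
proof -
  let ?d = "degree T"
  have "\<forall>p. (\<forall>i\<ge>N. coeff p i = 0) \<longrightarrow> (\<exists>q r. p = q * T + r \<and> low ?d r)" for N
  proof (induction N)
    case 0
    show ?case
    proof (intro allI impI)
      fix p :: "'a poly" assume "\<forall>i\<ge>0. coeff p i = 0"
      then have "p = 0" by (simp add: poly_eq_iff)
      then show "\<exists>q r. p = q * T + r \<and> low ?d r" by (intro exI[of _ 0]) simp
    qed
  next
    case (Suc N)
    show ?case
    proof (intro allI impI)
      fix p :: "'a poly" assume p: "\<forall>i\<ge>Suc N. coeff p i = 0"
      show "\<exists>q r. p = q * T + r \<and> low ?d r"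
      proof (cases "N < ?d")
        case True
        then have "low ?d p" using p by (auto simp: low_def)
        then show ?thesis by (intro exI[of _ 0] exI[of _ p]) simp
      next
        case False
        define p' where "p' = p - monom (coeff p N) (N - ?d) * T"
        have "\<forall>i\<ge>N. coeff p' i = 0"
        proof (intro allI impI)
          fix i assume i: "N \<le> i"
          have c: "coeff (monom (coeff p N) (N - ?d) * T) i = coeff p N * coeff T (i - (N - ?d))"
            using i False by (simp add: coeff_monom_mult)
          show "coeff p' i = 0"
          proof (cases "i = N")
            case True
            then have "i - (N - ?d) = ?d" using False by simp
            then show ?thesis using c T True by (simp add: p'_def)
          next
            case False
            then have "i - (N - ?d) > ?d" using i \<open>\<not> N < ?d\<close> by simp
            then have "coeff T (i - (N - ?d)) = 0" by (simp add: coeff_eq_0)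
            moreover have "coeff p i = 0" using p i False by simp
            ultimately show ?thesis using c by (simp add: p'_def)
          qed
        qed
        then obtain q r where qr: "p' = q * T + r" "low ?d r" using Suc.IH by blast
        show ?thesis
          by (intro exI[of _ "q + monom (coeff p N) (N - ?d)"] exI[of _ r])
             (use qr p'_def in \<open>simp add: algebra_simps\<close>)
      qed
    qed
  qed
  moreover have "\<forall>i\<ge>Suc (degree p). coeff p i = 0" by (simp add: coeff_eq_0)
  ultimately show ?thesis by blast
qed

lemma monic_div_unique:
  fixes T :: "'a::comm_ring_1 poly"
  assumes T: "lead_coeff T = 1"
    and eq: "q1 * T + r1 = q2 * T + r2" and l: "low (degree T) r1" "low (degree T) r2"
  shows "r1 = r2"
proof (cases "q1 = q2")
  case True
  then show ?thesis using eq by simp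
next
  case False
  define D where "D = q1 - q2"
  have D0: "D \<noteq> 0" using False by (simp add: D_def)
  have "D * T = r2 - r1" using eq by (simp add: D_def algebra_simps)
  then have "coeff (D * T) (degree D + degree T) = 0" using l by (simp add: low_def)
  moreover have "coeff (D * T) (degree D + degree T) = lead_coeff D" 
    using T by (simp add: coeff_mult_degree_sum)
  ultimately show ?thesis using D0 by simp
qed

definition prem :: "'a::comm_ring_1 poly \<Rightarrow> 'a poly \<Rightarrow> 'a poly" where
  "prem T p = (SOME r. low (degree T) r \<and> (\<exists>q. p = q * T + r))"

lemma prem:
  assumes "lead_coeff T = 1"
  shows "low (degree T) (prem T p) \<and> (\<exists>q. p = q * T + prem T p)"
proof -
  obtain q r where "p = q * T + r" "low (degree T) r" using monic_div_exists[OF assms] by blast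
  then have "\<exists>r. low (degree T) r \<and> (\<exists>q. p = q * T + r)" by blast
  then show ?thesis unfolding prem_def by (rule someI_ex)
qed

lemma I_mem: "x \<in> ideal_I r ts \<longleftrightarrow> (\<exists>h. (\<forall>k. h k \<in> mpolys r) \<and> x = (\<Sum>k<r. h k * uni_to_mpoly k (ts k)))"
  by (auto simp: ideal_I_def)

lemma I_sub: "x \<in> ideal_I r ts \<Longrightarrow> x \<in> mpolys r"
  by (auto simp: I_mem uni_mpolys intro!: mpolys_sum mpolys_mult)

lemma I_0[simp]: "0 \<in> ideal_I r ts"
  unfolding I_mem by (intro exI[of _ "\<lambda>_. 0"]) simp

lemma I_add: "x \<in> ideal_I r ts \<Longrightarrow> y \<in> ideal_I r ts \<Longrightarrow> x + y \<in> ideal_I r ts"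
  unfolding I_mem
proof (elim exE conjE)
  fix h1 h2 assume "\<forall>k. h1 k \<in> mpolys r" "x = (\<Sum>k<r. h1 k * uni_to_mpoly k (ts k))"
    "\<forall>k. h2 k \<in> mpolys r" "y = (\<Sum>k<r. h2 k * uni_to_mpoly k (ts k))"
  then show "\<exists>h. (\<forall>k. h k \<in> mpolys r) \<and> x + y = (\<Sum>k<r. h k * uni_to_mpoly k (ts k))"
    by (intro exI[of _ "\<lambda>k. h1 k + h2 k"]) (simp add: sum.distrib algebra_simps)
qed

lemma I_mult: "g \<in> mpolys r \<Longrightarrow> x \<in> ideal_I r ts \<Longrightarrow> g * x \<in> ideal_I r ts"
  unfolding I_mem
proof (elim exE conjE)
  fix h1 assume "g \<in> mpolys r" "\<forall>k. h1 k \<in> mpolys r" "x = (\<Sum>k<r. h1 k * uni_to_mpoly k (ts k))"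
  then show "\<exists>h. (\<forall>k. h k \<in> mpolys r) \<and> g * x = (\<Sum>k<r. h k * uni_to_mpoly k (ts k))"
    by (intro exI[of _ "\<lambda>k. g * h1 k"]) (simp add: sum_distrib_left algebra_simps)
qed

lemma I_mult2: "g \<in> mpolys r \<Longrightarrow> x \<in> ideal_I r ts \<Longrightarrow> x * g \<in> ideal_I r ts"
  using I_mult[of g r x ts] by (simp add: mult.commute)

lemma I_uminus: "x \<in> ideal_I r ts \<Longrightarrow> - x \<in> ideal_I r ts"
  using I_mult[of "-1" r x ts] by simp

lemma I_diff: "x \<in> ideal_I r ts \<Longrightarrow> y \<in> ideal_I r ts \<Longrightarrow> x - y \<in> ideal_I r ts"
  using I_add[of x r ts "-y"] I_uminus by fastforce

lemma I_sum: "(\<And>i. i \<in> S \<Longrightarrow> f i \<in> ideal_I r ts) \<Longrightarrow> sum f S \<in> ideal_I r ts"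
  by (induction S rule: infinite_finite_induct) (auto simp: I_add)

lemma I_gen: "k < r \<Longrightarrow> uni_to_mpoly k (ts k) \<in> ideal_I r ts"
  unfolding I_mem
proof (intro exI[of _ "\<lambda>l. if l = k then 1 else 0"] conjI)
  assume "k < r"
  have "(\<Sum>l<r. (if l = k then 1 else 0) * uni_to_mpoly l (ts l)) = (\<Sum>l<r. if l = k then uni_to_mpoly l (ts l) else 0)"
    by (rule sum.cong) auto
  also have "\<dots> = uni_to_mpoly k (ts k)" using \<open>k < r\<close> by (simp add: sum.delta)
  finally show "uni_to_mpoly k (ts k) = (\<Sum>l<r. (if l = k then 1 else 0) * uni_to_mpoly l (ts l))" by simp
qed auto

lemma I_prod_cong:
  assumes "\<And>k. k \<in> S \<Longrightarrow> f k \<in> mpolys r" "\<And>k. k \<in> S \<Longrightarrow> g k \<in> mpolys r"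
    "\<And>k. k \<in> S \<Longrightarrow> f k - g k \<in> ideal_I r ts"
  shows "prod f S - prod g S \<in> ideal_I r ts"
  using assms
proof (induction S rule: infinite_finite_induct)
  case (insert x F)
  have "prod f (insert x F) - prod g (insert x F) = f x * (prod f F - prod g F) + (f x - g x) * prod g F"
    using insert.hyps by (simp add: algebra_simps)
  also have "\<dots> \<in> ideal_I r ts"
    using insert by (intro I_add I_mult I_mult2) auto
  finally show ?case .
qed auto

lemma GC_mem: "x \<in> gen_code r ts t gens \<longleftrightarrow>
   (\<exists>h \<iota>. (\<forall>i. h i \<in> mpolys r) \<and> \<iota> \<in> ideal_I r ts \<and> x = (\<Sum>i\<in>{1..t}. h i * gens i) + \<iota>)"
  by (auto simp: gen_code_def)

lemma GC_I: "x \<in> ideal_I r ts \<Longrightarrow> x \<in> gen_code r ts t gens"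
  unfolding GC_mem by (intro exI[of _ "\<lambda>_. 0"] exI[of _ x]) simp

lemma GC_add: "x \<in> gen_code r ts t gens \<Longrightarrow> y \<in> gen_code r ts t gens \<Longrightarrow> x + y \<in> gen_code r ts t gens"
  unfolding GC_mem
proof (elim exE conjE)
  fix h1 h2 i1 i2 assume "\<forall>i. h1 i \<in> mpolys r" "i1 \<in> ideal_I r ts" "x = (\<Sum>i\<in>{1..t}. h1 i * gens i) + i1"
    "\<forall>i. h2 i \<in> mpolys r" "i2 \<in> ideal_I r ts" "y = (\<Sum>i\<in>{1..t}. h2 i * gens i) + i2"
  then show "\<exists>h \<iota>. (\<forall>i. h i \<in> mpolys r) \<and> \<iota> \<in> ideal_I r ts \<and> x + y = (\<Sum>i\<in>{1..t}. h i * gens i) + \<iota>"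
    by (intro exI[of _ "\<lambda>i. h1 i + h2 i"] exI[of _ "i1 + i2"]) (simp add: I_add sum.distrib algebra_simps)
qed

lemma GC_mult: "g \<in> mpolys r \<Longrightarrow> x \<in> gen_code r ts t gens \<Longrightarrow> g * x \<in> gen_code r ts t gens"
  unfolding GC_mem
proof (elim exE conjE)
  fix h1 i1 assume "g \<in> mpolys r" "\<forall>i. h1 i \<in> mpolys r" "i1 \<in> ideal_I r ts" "x = (\<Sum>i\<in>{1..t}. h1 i * gens i) + i1"
  then show "\<exists>h \<iota>. (\<forall>i. h i \<in> mpolys r) \<and> \<iota> \<in> ideal_I r ts \<and> g * x = (\<Sum>i\<in>{1..t}. h i * gens i) + \<iota>"
    by (intro exI[of _ "\<lambda>i. g * h1 i"] exI[of _ "g * i1"]) (simp add: I_mult sum_distrib_left algebra_simps)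
qed

lemma GC_gen: "j \<in> {1..t} \<Longrightarrow> g \<in> mpolys r \<Longrightarrow> g * gens j \<in> gen_code r ts t gens"
  unfolding GC_mem
proof (intro exI[of _ "\<lambda>i. if i = j then g else 0"] exI[of _ 0] conjI)
  assume "j \<in> {1..t}"
  have "(\<Sum>i\<in>{1..t}. (if i = j then g else 0) * gens i) = (\<Sum>i\<in>{1..t}. if i = j then g * gens i else 0)"
    by (rule sum.cong) auto
  also have "\<dots> = g * gens j" using \<open>j \<in> {1..t}\<close> by (simp add: sum.delta)
  finally show "g * gens j = (\<Sum>i\<in>{1..t}. (if i = j then g else 0) * gens i) + 0" by simp
qed auto

lemma GC_diff: "x \<in> gen_code r ts t gens \<Longrightarrow> y \<in> gen_code r ts t gens \<Longrightarrow> x - (y::'a::comm_ring_1 mpoly) \<in> gen_code r ts t gens"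
  using GC_add[of x r ts t gens "(-1) * y"] GC_mult[of "-1" r y ts t gens] by simp

lemma GC_sum: "(\<And>i. i \<in> S \<Longrightarrow> f i \<in> gen_code r ts t gens) \<Longrightarrow> sum f S \<in> gen_code r ts t gens"
  by (induction S rule: infinite_finite_induct) (auto simp: GC_add GC_I)

context
  fixes \<pi> :: "'a::comm_ring_1 \<Rightarrow> 'b::comm_ring_1"
  assumes hom: "ring_hom_cl \<pi>"
begin

lemma h_add: "\<pi> (x + y) = \<pi> x + \<pi> y" using hom by (simp add: ring_hom_cl_def)
lemma h_mult: "\<pi> (x * y) = \<pi> x * \<pi> y" using hom by (simp add: ring_hom_cl_def)
lemma h_one: "\<pi> 1 = 1" using hom by (simp add: ring_hom_cl_def)
lemma h_zero: "\<pi> 0 = 0" using h_add[of 0 0] by simp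
lemma h_uminus: "\<pi> (- x) = - \<pi> x"
proof -
  have "\<pi> x + \<pi> (-x) = \<pi> x + (- \<pi> x)" using h_add[of x "-x"] h_zero by simp
  then show ?thesis by (rule add_left_imp_eq)
qed
lemma h_diff: "\<pi> (x - y) = \<pi> x - \<pi> y" using h_add[of x "-y"] h_uminus by simp
lemma h_pow: "\<pi> (x ^ n) = \<pi> x ^ n" by (induction n) (auto simp: h_one h_mult)

lemma lookup_mapp: "Poly_Mapping.lookup (Poly_Mapping.map \<pi> p) m = \<pi> (Poly_Mapping.lookup p m)"
  by (simp add: lookup_map_z h_zero)

lemma map_add: "Poly_Mapping.map \<pi> (p + q) = Poly_Mapping.map \<pi> p + Poly_Mapping.map \<pi> q"
  by (rule poly_mapping_eqI) (simp add: lookup_mapp lookup_add h_add)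

lemma map_zero[simp]: "Poly_Mapping.map \<pi> 0 = 0"
  by (rule poly_mapping_eqI) (simp add: lookup_mapp h_zero)

lemma map_uminus: "Poly_Mapping.map \<pi> (- p) = - Poly_Mapping.map \<pi> p"
  by (rule poly_mapping_eqI) (simp add: lookup_mapp h_uminus)

lemma map_diff: "Poly_Mapping.map \<pi> (p - q) = Poly_Mapping.map \<pi> p - Poly_Mapping.map \<pi> q"
  by (rule poly_mapping_eqI) (simp add: lookup_mapp lookup_minus h_diff)

lemma map_sum: "Poly_Mapping.map \<pi> (sum f S) = (\<Sum>i\<in>S. Poly_Mapping.map \<pi> (f i))"
  by (induction S rule: infinite_finite_induct) (auto simp: map_add)

lemma map_single': "Poly_Mapping.map \<pi> (Poly_Mapping.single m c) = Poly_Mapping.single m (\<pi> c)"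
  by (simp add: h_zero)

lemma map_mult: "Poly_Mapping.map \<pi> (p * q) = Poly_Mapping.map \<pi> p * Poly_Mapping.map \<pi> (q :: ('c::comm_monoid_add \<Rightarrow>\<^sub>0 'a))"
proof -
  have "Poly_Mapping.map \<pi> (p * q) = Poly_Mapping.map \<pi> ((\<Sum>m\<in>Poly_Mapping.keys p. Poly_Mapping.single m (Poly_Mapping.lookup p m)) *
        (\<Sum>m\<in>Poly_Mapping.keys q. Poly_Mapping.single m (Poly_Mapping.lookup q m)))"
    by (simp flip: mpoly_expand)
  also have "\<dots> = (\<Sum>m\<in>Poly_Mapping.keys p. \<Sum>n\<in>Poly_Mapping.keys q.
      Poly_Mapping.map \<pi> (Poly_Mapping.single m (Poly_Mapping.lookup p m)) * Poly_Mapping.map \<pi> (Poly_Mapping.single n (Poly_Mapping.lookup q n)))"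
    by (simp add: sum_product map_sum mult_single h_zero h_mult)
  also have "\<dots> = Poly_Mapping.map \<pi> (\<Sum>m\<in>Poly_Mapping.keys p. Poly_Mapping.single m (Poly_Mapping.lookup p m)) *
        Poly_Mapping.map \<pi> (\<Sum>m\<in>Poly_Mapping.keys q. Poly_Mapping.single m (Poly_Mapping.lookup q m))"
    by (simp add: sum_product map_sum)
  also have "\<dots> = Poly_Mapping.map \<pi> p * Poly_Mapping.map \<pi> q"
    by (simp flip: mpoly_expand)
  finally show ?thesis .
qed

lemma map_one[simp]: "Poly_Mapping.map \<pi> (1::('c::comm_monoid_add \<Rightarrow>\<^sub>0 'a)) = 1"
  by (rule poly_mapping_eqI) (simp add: lookup_mapp lookup_one h_one h_zero when_def)

lemma map_cm: "Poly_Mapping.map \<pi> (const_mpoly c) = const_mpoly (\<pi> c)"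
  by (simp add: const_mpoly_def h_zero)

lemma map_pow: "Poly_Mapping.map \<pi> (p ^ n) = (Poly_Mapping.map \<pi> (p::('c::comm_monoid_add \<Rightarrow>\<^sub>0 'a))) ^ n"
  by (induction n) (auto simp: map_mult)

lemma map_uni: "Poly_Mapping.map \<pi> (uni_to_mpoly k q) = uni_to_mpoly k (map_poly \<pi> q)"
proof (rule poly_mapping_eqI)
  fix m
  show "Poly_Mapping.lookup (Poly_Mapping.map \<pi> (uni_to_mpoly k q)) m = Poly_Mapping.lookup (uni_to_mpoly k (map_poly \<pi> q)) m"
    unfolding lookup_mapp lookup_uni
    by (cases "m = Poly_Mapping.single k (Poly_Mapping.lookup m k)") (simp_all only: simp_thms if_True if_False coeff_map_poly h_zero)
qed

lemma keys_mapp: "Poly_Mapping.keys (Poly_Mapping.map \<pi> p) \<subseteq> Poly_Mapping.keys p"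
  by (auto simp: in_keys_iff lookup_mapp h_zero)

lemma map_mpolys: "p \<in> mpolys r \<Longrightarrow> Poly_Mapping.map \<pi> p \<in> mpolys r"
  unfolding mpolys_iff using keys_mapp[of p] by (meson subsetD)

lemma map_I: "x \<in> ideal_I r ts \<Longrightarrow> Poly_Mapping.map \<pi> x \<in> ideal_I r (\<lambda>k. map_poly \<pi> (ts k))"
  unfolding I_mem
proof (elim exE conjE)
  fix h assume "\<forall>k. h k \<in> mpolys r" "x = (\<Sum>k<r. h k * uni_to_mpoly k (ts k))"
  then show "\<exists>h. (\<forall>k. h k \<in> mpolys r) \<and> Poly_Mapping.map \<pi> x = (\<Sum>k<r. h k * uni_to_mpoly k (map_poly \<pi> (ts k)))"
    by (intro exI[of _ "\<lambda>k. Poly_Mapping.map \<pi> (h k)"]) (simp add: map_mpolys map_sum map_mult map_uni)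
qed

end

definition Bm :: "nat \<Rightarrow> (nat \<Rightarrow> 'a::comm_ring_1 poly) \<Rightarrow> (nat \<Rightarrow>\<^sub>0 nat) \<Rightarrow> 'a mpoly" where
  "Bm r ts m = (\<Prod>k<r. uni_to_mpoly k (prem (ts k) (monom 1 (Poly_Mapping.lookup m k))))"

definition NF :: "nat \<Rightarrow> (nat \<Rightarrow> 'a::comm_ring_1 poly) \<Rightarrow> 'a mpoly \<Rightarrow> 'a mpoly" where
  "NF r ts p = (\<Sum>m\<in>Poly_Mapping.keys p. const_mpoly (Poly_Mapping.lookup p m) * Bm r ts m)"

lemma NF_S: "finite S \<Longrightarrow> Poly_Mapping.keys p \<subseteq> S \<Longrightarrow>
  NF r ts p = (\<Sum>m\<in>S. const_mpoly (Poly_Mapping.lookup p m) * Bm r ts m)"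
  unfolding NF_def by (rule sum.mono_neutral_left) (auto simp: in_keys_iff)

lemma NF_add: "NF r ts (p + q) = NF r ts p + NF r ts q"
proof -
  let ?S = "Poly_Mapping.keys p \<union> Poly_Mapping.keys q"
  have "Poly_Mapping.keys (p + q) \<subseteq> ?S" by (rule keys_add)
  then show ?thesis
    by (simp add: NF_S[of ?S] lookup_add cm_add sum.distrib algebra_simps)
qed

lemma NF_zero[simp]: "NF r ts 0 = 0" by (simp add: NF_def)

lemma NF_sum: "NF r ts (sum f S) = (\<Sum>i\<in>S. NF r ts (f i))"
  by (induction S rule: infinite_finite_induct) (auto simp: NF_add)

lemma NF_cm: "NF r ts (const_mpoly c * p) = const_mpoly c * NF r ts p"
proof -
  have "NF r ts (const_mpoly c * p) = (\<Sum>m\<in>Poly_Mapping.keys p. const_mpoly (Poly_Mapping.lookup (const_mpoly c * p) m) * Bm r ts m)"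
    by (rule NF_S) (auto simp: keys_cm)
  also have "\<dots> = const_mpoly c * NF r ts p"
    by (simp add: NF_def lookup_cm sum_distrib_left cm_mult[symmetric] mult.assoc)
  finally show ?thesis .
qed

lemma NF_single: "NF r ts (Poly_Mapping.single m c) = const_mpoly c * Bm r ts m"
  by (simp add: NF_S[of "{m}"])

lemma prod_single: "(\<Prod>k\<in>S. Poly_Mapping.single (f k) (1::'a::comm_ring_1)) = Poly_Mapping.single (\<Sum>k\<in>S. f k) 1"
  by (induction S rule: infinite_finite_induct) (auto simp: mult_single)

lemma sum_single_keys: "Poly_Mapping.keys m \<subseteq> {..<r} \<Longrightarrow> (\<Sum>k<r. Poly_Mapping.single k (Poly_Mapping.lookup m k)) = (m::nat \<Rightarrow>\<^sub>0 nat)"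
proof (rule poly_mapping_eqI)
  fix x assume A: "Poly_Mapping.keys m \<subseteq> {..<r}"
  have "Poly_Mapping.lookup (\<Sum>k<r. Poly_Mapping.single k (Poly_Mapping.lookup m k)) x = (\<Sum>k<r. if k = x then Poly_Mapping.lookup m k else 0)"
    by (simp add: lookup_sum lookup_single when_def)
  also have "\<dots> = Poly_Mapping.lookup m x" using A by (auto simp: in_keys_iff)
  finally show "Poly_Mapping.lookup (\<Sum>k<r. Poly_Mapping.single k (Poly_Mapping.lookup m k)) x = Poly_Mapping.lookup m x" .
qed

lemma keys_prod_uni:
  assumes "finite S" "\<And>k. k \<in> S \<Longrightarrow> low (d k) (q k)"
  shows "Poly_Mapping.keys (\<Prod>k\<in>S. uni_to_mpoly k (q k)) \<subseteq> {m. Poly_Mapping.keys m \<subseteq> S \<and> (\<forall>k\<in>S. Poly_Mapping.lookup m k < d k)}"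
  using assms
proof (induction S rule: finite_induct)
  case empty
  then show ?case by simp
next
  case (insert x S)
  show ?case
  proof
    fix m assume "m \<in> Poly_Mapping.keys (\<Prod>k\<in>insert x S. uni_to_mpoly k (q k))"
    then have "m \<in> Poly_Mapping.keys (uni_to_mpoly x (q x) * (\<Prod>k\<in>S. uni_to_mpoly k (q k)))"
      using insert.hyps by simp
    then obtain a b where ab: "m = a + b" "a \<in> Poly_Mapping.keys (uni_to_mpoly x (q x))"
      "b \<in> Poly_Mapping.keys (\<Prod>k\<in>S. uni_to_mpoly k (q k))"
      using keys_mult by blast
    have b: "Poly_Mapping.keys b \<subseteq> S" "\<forall>k\<in>S. Poly_Mapping.lookup b k < d k"
      using ab(3) insert by auto
    define j where "j = Poly_Mapping.lookup a x"
    have a: "a = Poly_Mapping.single x j" "coeff (q x) j \<noteq> 0"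
      using keys_uni[OF ab(2)] j_def by auto
    have "j < d x" using a(2) insert.prems[of x] by (auto simp: low_def not_less[symmetric])
    have bx: "Poly_Mapping.lookup b x = 0" using b(1) insert.hyps by (auto simp: in_keys_iff)
    have "Poly_Mapping.keys a \<subseteq> {x}" using a(1) by simp
    then have "Poly_Mapping.keys m \<subseteq> insert x S"
      using ab(1) keys_add[of a b] b(1) by blast
    moreover have "\<forall>k\<in>insert x S. Poly_Mapping.lookup m k < d k"
    proof
      fix k assume "k \<in> insert x S"
      then show "Poly_Mapping.lookup m k < d k"
      proof
        assume "k = x" then show ?thesis using ab(1) a(1) bx \<open>j < d x\<close> by (simp add: lookup_add)
      next
        assume "k \<in> S"
        then have "k \<noteq> x" using insert.hyps by auto
        then show ?thesis using ab(1) a(1) b(2) \<open>k \<in> S\<close> by (simp add: lookup_add lookup_single)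
      qed
    qed
    ultimately show "m \<in> {m. Poly_Mapping.keys m \<subseteq> insert x S \<and> (\<forall>k\<in>insert x S. Poly_Mapping.lookup m k < d k)}"
      by blast
  qed
qed

context
  fixes r :: nat and ts :: "nat \<Rightarrow> 'a::comm_ring_1 poly"
  assumes monic: "\<And>k. k < r \<Longrightarrow> lead_coeff (ts k) = 1"
begin

lemma NF_reduced: "reduced r ts (NF r ts p)"
proof -
  have B: "Poly_Mapping.keys (Bm r ts m) \<subseteq> {m. Poly_Mapping.keys m \<subseteq> {..<r} \<and> (\<forall>k\<in>{..<r}. Poly_Mapping.lookup m k < degree (ts k))}" for m
    unfolding Bm_def by (rule keys_prod_uni) (use prem monic in auto)
  have "Poly_Mapping.keys (NF r ts p) \<subseteq> (\<Union>m\<in>Poly_Mapping.keys p. Poly_Mapping.keys (const_mpoly (Poly_Mapping.lookup p m) * Bm r ts m))"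
    unfolding NF_def by (rule keys_sum)
  also have "\<dots> \<subseteq> (\<Union>m\<in>Poly_Mapping.keys p. Poly_Mapping.keys (Bm r ts m))"
    using keys_cm by blast
  finally show ?thesis using B unfolding reduced_def by blast
qed

lemma NF_kill1:
  assumes k: "k < r"
  shows "NF r ts (Poly_Mapping.single m 1 * uni_to_mpoly k (ts k)) = 0"
proof -
  define T where "T = ts k"
  define D where "D = degree T"
  define c where "c j = coeff T j" for j
  have T1: "lead_coeff T = 1" using monic k T_def by simp
  have "\<forall>n. \<exists>q. monom 1 n = q * T + prem T (monom 1 n)" using prem[OF T1] by blast
  then have "\<exists>Q. \<forall>n. monom 1 n = Q n * T + prem T (monom 1 n)" by (rule choice)
  then obtain Q where Q: "\<And>n. monom 1 n = Q n * T + prem T (monom 1 n)" by blast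
  define mk where "mk = Poly_Mapping.lookup m k"
  define P' where "P' = (\<Prod>l\<in>{..<r}-{k}. uni_to_mpoly l (prem (ts l) (monom 1 (Poly_Mapping.lookup m l))))"
  have Bsplit: "Bm r ts (m + Poly_Mapping.single k j) = uni_to_mpoly k (prem T (monom 1 (mk + j))) * P'" for j
  proof -
    have "Bm r ts (m + Poly_Mapping.single k j) =
       uni_to_mpoly k (prem (ts k) (monom 1 (Poly_Mapping.lookup (m + Poly_Mapping.single k j) k))) *
       (\<Prod>l\<in>{..<r}-{k}. uni_to_mpoly l (prem (ts l) (monom 1 (Poly_Mapping.lookup (m + Poly_Mapping.single k j) l))))"
      unfolding Bm_def using k by (subst prod.remove[of _ k]) auto
    also have "(\<Prod>l\<in>{..<r}-{k}. uni_to_mpoly l (prem (ts l) (monom 1 (Poly_Mapping.lookup (m + Poly_Mapping.single k j) l)))) = P'"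
      unfolding P'_def by (rule prod.cong) (auto simp: lookup_add lookup_single)
    finally show ?thesis by (simp add: lookup_add T_def mk_def)
  qed
  have "Poly_Mapping.single m 1 * uni_to_mpoly k T = (\<Sum>j\<le>D. Poly_Mapping.single (m + Poly_Mapping.single k j) (c j))"
    by (simp add: uni_to_mpoly_def D_def c_def sum_distrib_left mult_single)
  then have "NF r ts (Poly_Mapping.single m 1 * uni_to_mpoly k T) = (\<Sum>j\<le>D. const_mpoly (c j) * Bm r ts (m + Poly_Mapping.single k j))"
    by (simp add: NF_sum NF_single)
  also have "\<dots> = uni_to_mpoly k (\<Sum>j\<le>D. smult (c j) (prem T (monom 1 (mk + j)))) * P'"
    by (simp add: Bsplit uni_sum uni_smult sum_distrib_right mult.assoc)
  also have "(\<Sum>j\<le>D. smult (c j) (prem T (monom 1 (mk + j)))) = 0"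
  proof -
    have "monom 1 mk * T = monom 1 mk * (\<Sum>j\<le>D. monom (c j) j)"
      by (simp add: c_def D_def poly_as_sum_of_monoms)
    also have "\<dots> = (\<Sum>j\<le>D. smult (c j) (monom 1 (mk + j)))"
      by (simp add: sum_distrib_left mult_monom smult_monom)
    also have "\<dots> = (\<Sum>j\<le>D. smult (c j) (Q (mk + j))) * T + (\<Sum>j\<le>D. smult (c j) (prem T (monom 1 (mk + j))))"
      by (subst Q) (simp add: sum.distrib sum_distrib_right smult_add_right)
    finally have "(\<Sum>j\<le>D. smult (c j) (Q (mk + j))) * T + (\<Sum>j\<le>D. smult (c j) (prem T (monom 1 (mk + j)))) = monom 1 mk * T + 0"
      by simp
    then show ?thesis
      by (rule monic_div_unique[OF T1]) (auto intro!: low_sum low_smult simp: prem[OF T1])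
  qed
  finally show ?thesis by (simp add: T_def)
qed

lemma NF_kill: "k < r \<Longrightarrow> NF r ts (h * uni_to_mpoly k (ts k)) = 0"
proof -
  assume k: "k < r"
  have "h * uni_to_mpoly k (ts k) = (\<Sum>m\<in>Poly_Mapping.keys h. const_mpoly (Poly_Mapping.lookup h m) * (Poly_Mapping.single m 1 * uni_to_mpoly k (ts k)))"
    by (subst mpoly_expand[of h]) (simp add: sum_distrib_right single_as_cm[of _ "Poly_Mapping.lookup h _"] mult.assoc)
  then show ?thesis by (simp add: NF_sum NF_cm NF_kill1[OF k])
qed

lemma NF_I: "x \<in> ideal_I r ts \<Longrightarrow> NF r ts x = 0"
  by (auto simp: I_mem NF_sum NF_kill)

lemma single_cong: "Poly_Mapping.keys m \<subseteq> {..<r} \<Longrightarrow> Poly_Mapping.single m 1 - Bm r ts m \<in> ideal_I r ts"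
proof -
  assume A: "Poly_Mapping.keys m \<subseteq> {..<r}"
  have eq: "Poly_Mapping.single m (1::'a) = (\<Prod>k<r. uni_to_mpoly k (monom 1 (Poly_Mapping.lookup m k)))"
    by (simp add: uni_monom prod_single sum_single_keys[OF A])
  moreover have "(\<Prod>k<r. uni_to_mpoly k (monom 1 (Poly_Mapping.lookup m k))) - Bm r ts m \<in> ideal_I r ts"
    unfolding Bm_def
  proof (rule I_prod_cong)
    fix k assume "k \<in> {..<r}"
    then have k: "k < r" by simp
    obtain q where q: "monom 1 (Poly_Mapping.lookup m k) = q * ts k + prem (ts k) (monom 1 (Poly_Mapping.lookup m k))"
      using prem[OF monic[OF k]] by blast
    have "uni_to_mpoly k (monom 1 (Poly_Mapping.lookup m k)) - uni_to_mpoly k (prem (ts k) (monom 1 (Poly_Mapping.lookup m k)))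
        = uni_to_mpoly k q * uni_to_mpoly k (ts k)"
      by (subst q) (simp add: uni_add uni_mult)
    also have "\<dots> \<in> ideal_I r ts" by (rule I_mult[OF uni_mpolys[OF k] I_gen[OF k]])
    finally show "uni_to_mpoly k (monom 1 (Poly_Mapping.lookup m k)) - uni_to_mpoly k (prem (ts k) (monom 1 (Poly_Mapping.lookup m k))) \<in> ideal_I r ts" .
  qed (auto simp: uni_mpolys)
  with eq show ?thesis by (simp only:)
qed

lemma NF_cong: "p \<in> mpolys r \<Longrightarrow> p - NF r ts p \<in> ideal_I r ts"
proof -
  assume p: "p \<in> mpolys r"
  have "p - NF r ts p = (\<Sum>m\<in>Poly_Mapping.keys p. const_mpoly (Poly_Mapping.lookup p m) * (Poly_Mapping.single m 1 - Bm r ts m))"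
    by (subst (1) mpoly_expand[of p]) (simp add: NF_def single_as_cm[of _ "Poly_Mapping.lookup p _"] sum_subtractf algebra_simps)
  also have "\<dots> \<in> ideal_I r ts"
  proof -
    have pk: "\<And>m. m \<in> Poly_Mapping.keys p \<Longrightarrow> Poly_Mapping.keys m \<subseteq> {..<r}" using p by (simp add: mpolys_iff)
    show ?thesis by (intro I_sum I_mult[OF mpolys_cm] single_cong pk)
  qed
  finally show ?thesis .
qed

end

context
  fixes a :: "'r::comm_ring_1" and t :: nat and \<pi> :: "'r \<Rightarrow> 'f::field"
  assumes max: "maximal_ideal (principal a)"
    and nilp: "t \<ge> 1" "a ^ t = 0" "a ^ (t - 1) \<noteq> 0"
    and hom: "ring_hom_cl \<pi>" and ker: "{x. \<pi> x = 0} = principal a"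
begin

lemma not_principal_unit:
  assumes x: "x \<notin> principal a"
  shows "\<exists>z. x * z = 1"
proof -
  define J where "J = {a * y + x * z | y z. True}"
  have idJ: "is_ideal J"
    unfolding is_ideal_def J_def
  proof (intro conjI ballI allI)
    show "0 \<in> {a * y + x * z |y z. True}" by (intro CollectI exI[of _ 0]) simp
  next
    fix u v assume "u \<in> {a * y + x * z |y z. True}" "v \<in> {a * y + x * z |y z. True}"
    then obtain y1 z1 y2 z2 where "u = a * y1 + x * z1" "v = a * y2 + x * z2" by blast
    then show "u + v \<in> {a * y + x * z |y z. True}"
      by (intro CollectI exI[of _ "y1 + y2"] exI[of _ "z1 + z2"]) (simp add: algebra_simps)
  next
    fix u w assume "u \<in> {a * y + x * z |y z. True}"
    then obtain y1 z1 where "u = a * y1 + x * z1" by blast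
    then show "w * u \<in> {a * y + x * z |y z. True}"
      by (intro CollectI exI[of _ "w * y1"] exI[of _ "w * z1"]) (simp add: algebra_simps)
  qed
  have sub: "principal a \<subseteq> J"
  proof
    fix u assume "u \<in> principal a"
    then obtain y where "u = a * y" unfolding principal_def by blast
    then have "u = a * y + x * 0" by simp
    then show "u \<in> J" unfolding J_def by blast
  qed
  have "x = a * 0 + x * 1" by simp
  then have "x \<in> J" unfolding J_def by blast
  then have "J \<noteq> principal a" using x by blast
  then have "J = UNIV" using max idJ sub unfolding maximal_ideal_def by blast
  then have "1 \<in> J" by simp
  then obtain y z where yz: "1 = a * y + x * z" unfolding J_def by blast
  have "(1 - a * y) * (\<Sum>i<t. (a * y) ^ i) = 1 - (a * y) ^ t"
    by (simp add: one_diff_power_eq)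
  also have "\<dots> = 1" using nilp by (simp add: power_mult_distrib)
  finally have 1: "(1 - a * y) * (\<Sum>i<t. (a * y) ^ i) = 1" .
  have "x * z = 1 - a * y" using yz by (simp add: eq_diff_eq add.commute)
  then have "x * (z * (\<Sum>i<t. (a * y) ^ i)) = 1" using 1 by (simp add: mult.assoc[symmetric])
  then show ?thesis by blast
qed

lemma pi_zero_iff: "\<pi> x = 0 \<longleftrightarrow> x \<in> principal a"
  using ker by blast

lemma top_ann: "a ^ (t - 1) * x = 0 \<longleftrightarrow> \<pi> x = 0"
proof
  assume A: "a ^ (t - 1) * x = 0"
  show "\<pi> x = 0"
  proof (rule ccontr)
    assume "\<pi> x \<noteq> 0"
    then have "x \<notin> principal a" using pi_zero_iff by blast
    then obtain z where "x * z = 1" using not_principal_unit by blast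
    then have "a ^ (t - 1) = a ^ (t - 1) * x * z" by (simp add: mult.assoc)
    then show False using A nilp by simp
  qed
next
  assume "\<pi> x = 0"
  then obtain y where "x = a * y" using pi_zero_iff unfolding principal_def by blast
  then have "a ^ (t - 1) * x = a ^ t * y" using nilp
    by (simp add: mult.assoc[symmetric] power_Suc2[symmetric])
  then show "a ^ (t - 1) * x = 0" using nilp by simp
qed

lemma pow_zero_ge: "a ^ k = 0 \<Longrightarrow> k \<ge> t"
proof (rule ccontr)
  assume "a ^ k = 0" "\<not> k \<ge> t"
  then have "t - 1 = k + (t - 1 - k)" by simp
  then have "a ^ (t - 1) = a ^ k * a ^ (t - 1 - k)" by (metis power_add)
  then show False using \<open>a ^ k = 0\<close> nilp by simp
qed

lemma ann_a:
  assumes "a * x = 0"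
  shows "\<exists>y. x = a ^ (t - 1) * y"
proof (cases "x = 0")
  case True
  then show ?thesis by (intro exI[of _ 0]) simp
next
  case False
  define S where "S = {k. \<exists>y. x = a ^ k * y}"
  have "0 \<in> S" unfolding S_def by simp
  have Sb: "S \<subseteq> {..<t}"
  proof
    fix k assume "k \<in> S"
    then obtain y where y: "x = a ^ k * y" unfolding S_def by blast
    show "k \<in> {..<t}"
    proof (rule ccontr)
      assume "k \<notin> {..<t}"
      then have "a ^ k = a ^ t * a ^ (k - t)" by (simp add: power_add[symmetric])
      then show False using y False nilp by simp
    qed
  qed
  then have finS: "finite S" by (rule finite_subset) simp
  define k where "k = Max S"
  have "k \<in> S" unfolding k_def using finS \<open>0 \<in> S\<close> by (intro Max_in) auto
  then obtain y where y: "x = a ^ k * y" unfolding S_def by blast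
  have "y \<notin> principal a"
  proof
    assume "y \<in> principal a"
    then obtain y' where "y = a * y'" unfolding principal_def by blast
    then have "x = a ^ Suc k * y'" using y by (simp add: power_Suc2 mult.assoc)
    then have "Suc k \<in> S" unfolding S_def by blast
    then have "Suc k \<le> k" unfolding k_def by (rule Max_ge[OF finS])
    then show False by simp
  qed
  then obtain z where z: "y * z = 1" using not_principal_unit by blast
  have "a ^ Suc k * y = 0" using assms y by (simp add: mult.assoc)
  then have "a ^ Suc k = 0" using z by (metis mult.assoc mult.right_neutral mult_zero_left)
  then have "Suc k \<ge> t" by (rule pow_zero_ge)
  moreover have "k < t" using \<open>k \<in> S\<close> Sb by auto
  ultimately have "k = t - 1" by simp
  then show ?thesis using y by blast
qed

end

lemma finite_box:
  "finite {m::nat \<Rightarrow>\<^sub>0 nat. Poly_Mapping.keys m \<subseteq> {..<r} \<and> (\<forall>k<r. Poly_Mapping.lookup m k < d k)}"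
  (is "finite ?B")
proof -
  have inj: "inj_on (\<lambda>m. restrict (Poly_Mapping.lookup m) {..<r}) ?B"
  proof (rule inj_onI)
    fix m1 m2 assume A: "m1 \<in> ?B" "m2 \<in> ?B"
      "restrict (Poly_Mapping.lookup m1) {..<r} = restrict (Poly_Mapping.lookup m2) {..<r}"
    show "m1 = m2"
    proof (rule poly_mapping_eqI)
      fix k
      show "Poly_Mapping.lookup m1 k = Poly_Mapping.lookup m2 k"
      proof (cases "k < r")
        case True
        then show ?thesis using A(3) by (metis lessThan_iff restrict_apply')
      next
        case False
        then have "k \<notin> Poly_Mapping.keys m1" "k \<notin> Poly_Mapping.keys m2" using A(1,2) by auto
        then show ?thesis by (simp add: in_keys_iff)
      qed
    qed
  qed
  have "(\<lambda>m. restrict (Poly_Mapping.lookup m) {..<r}) ` ?B \<subseteq> (\<Pi>\<^sub>E k\<in>{..<r}. {..<d k})"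
  proof (rule image_subsetI)
    fix m assume "m \<in> ?B"
    then show "restrict (Poly_Mapping.lookup m) {..<r} \<in> (\<Pi>\<^sub>E k\<in>{..<r}. {..<d k})"
      by (intro restrict_PiE_iff[THEN iffD2]) auto
  qed
  moreover have "finite (\<Pi>\<^sub>E k\<in>{..<r}. {..<d k})" by (intro finite_PiE) auto
  ultimately have "finite ((\<lambda>m. restrict (Poly_Mapping.lookup m) {..<r}) ` ?B)" by (rule finite_subset)
  then show ?thesis using inj by (rule finite_imageD)
qed

lemma finite_keys_sub:
  assumes "finite B"
  shows "finite {p :: 'k \<Rightarrow>\<^sub>0 'v::{zero,finite}. Poly_Mapping.keys p \<subseteq> B}" (is "finite ?P")
proof -
  have inj: "inj_on (\<lambda>p. restrict (Poly_Mapping.lookup p) B) ?P"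
  proof (rule inj_onI)
    fix p1 p2 assume A: "p1 \<in> ?P" "p2 \<in> ?P"
      "restrict (Poly_Mapping.lookup p1) B = restrict (Poly_Mapping.lookup p2) B"
    show "p1 = p2"
    proof (rule poly_mapping_eqI)
      fix k
      show "Poly_Mapping.lookup p1 k = Poly_Mapping.lookup p2 k"
      proof (cases "k \<in> B")
        case True
        then show ?thesis using A(3) by (metis restrict_apply')
      next
        case False
        then have "k \<notin> Poly_Mapping.keys p1" "k \<notin> Poly_Mapping.keys p2" using A(1,2) by auto
        then show ?thesis by (simp add: in_keys_iff)
      qed
    qed
  qed
  have "(\<lambda>p. restrict (Poly_Mapping.lookup p) B) ` ?P \<subseteq> (\<Pi>\<^sub>E k\<in>B. UNIV)"
  proof (rule image_subsetI)
    fix p assume "p \<in> ?P"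
    show "restrict (Poly_Mapping.lookup p) B \<in> (\<Pi>\<^sub>E k\<in>B. UNIV)"
      by (intro restrict_PiE_iff[THEN iffD2]) auto
  qed
  moreover have "finite (\<Pi>\<^sub>E k\<in>B. (UNIV :: 'v set))" by (intro finite_PiE assms) auto
  ultimately have "finite ((\<lambda>p. restrict (Poly_Mapping.lookup p) B) ` ?P)" by (rule finite_subset)
  then show ?thesis using inj by (rule finite_imageD)
qed

lemma reduced_keys: "reduced r ts p \<longleftrightarrow>
   Poly_Mapping.keys p \<subseteq> {m. Poly_Mapping.keys m \<subseteq> {..<r} \<and> (\<forall>k<r. Poly_Mapping.lookup m k < degree (ts k))}"
  unfolding reduced_def by blast

lemma finite_reduced: "finite {p :: ('r::{comm_ring_1,finite}) mpoly. reduced r ts p}"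
  unfolding reduced_keys by (rule finite_keys_sub[OF finite_box])

lemma hweight_bound: "reduced r ts p \<Longrightarrow>
   hweight p \<le> card {m::nat \<Rightarrow>\<^sub>0 nat. Poly_Mapping.keys m \<subseteq> {..<r} \<and> (\<forall>k<r. Poly_Mapping.lookup m k < degree (ts k))}"
  unfolding hweight_def reduced_keys by (rule card_mono[OF finite_box])

lemma min_eq:
  fixes A B :: "nat set"
  assumes "finite A" "finite B" "\<forall>x\<in>A. \<exists>y\<in>B. y \<le> x" "\<forall>y\<in>B. \<exists>x\<in>A. x \<le> y"
  shows "(if A = {} then 0 else Min A) = (if B = {} then 0 else Min B)"
proof (cases "A = {}")
  case True
  then have "B = {}" using assms(4) by blast
  then show ?thesis using True by simp
next
  case False
  then have "B \<noteq> {}" using assms(3) by blast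
  obtain y where y: "y \<in> B" "y \<le> Min A" using assms(3) Min_in[OF assms(1) False] by blast
  obtain x where x: "x \<in> A" "x \<le> Min B" using assms(4) Min_in[OF assms(2) \<open>B \<noteq> {}\<close>] by blast
  have "Min B \<le> Min A" using y Min_le[OF assms(2)] by (meson le_trans)
  moreover have "Min A \<le> Min B" using x Min_le[OF assms(1)] by (meson le_trans)
  ultimately show ?thesis using False \<open>B \<noteq> {}\<close> by simp
qed

lemma lookup_map_gen: "Poly_Mapping.lookup (Poly_Mapping.map f p) m =
   (if Poly_Mapping.lookup p m = 0 then 0 else f (Poly_Mapping.lookup p m))"
  by (simp add: Poly_Mapping.map.rep_eq when_def)

lemma ann_mem: "x \<in> ann r ts g \<longleftrightarrow> x \<in> mpolys r \<and> x * g \<in> ideal_I r ts"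
  by (simp add: ann_def)

lemma reduced_cong: "Poly_Mapping.keys p = Poly_Mapping.keys q \<Longrightarrow> (\<And>k. k < r \<Longrightarrow> degree (ts k) = degree (ts' k)) \<Longrightarrow>
   reduced r ts p \<longleftrightarrow> reduced r ts' q"
  unfolding reduced_def by auto

lemma reduced_mono: "Poly_Mapping.keys p \<subseteq> Poly_Mapping.keys q \<Longrightarrow> reduced r ts q \<Longrightarrow> reduced r ts p"
  unfolding reduced_def by blast

lemma reduced_mpolys: "reduced r ts p \<Longrightarrow> p \<in> mpolys r"
  unfolding reduced_def mpolys_iff by blast

lemma cm_zero_iff: "const_mpoly (c::'a::comm_ring_1) * p = 0 \<longleftrightarrow> (\<forall>m. c * Poly_Mapping.lookup p m = 0)"
  by (auto simp: poly_mapping_eq_iff lookup_cm fun_eq_iff)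

locale mt =
  fixes a :: "'r::{comm_ring_1, finite}"
    and t :: nat
    and \<pi> :: "'r \<Rightarrow> 'f::field"
    and r :: nat
    and ts :: "nat \<Rightarrow> 'r poly"
    and G :: "nat \<Rightarrow> 'r mpoly"
  assumes max: "maximal_ideal (principal a)"
    and nilp: "t \<ge> 1" "a ^ t = 0" "a ^ (t - 1) \<noteq> 0"
    and hom: "ring_hom_cl \<pi>" and surj: "surj \<pi>" and ker: "{x. \<pi> x = 0} = principal a"
    and monic: "\<And>k. k < r \<Longrightarrow> lead_coeff (ts k) = 1"
    and G_in: "\<And>i. i \<le> t \<Longrightarrow> G i \<in> mpolys r"
    and adm_inter: "(\<Inter>i\<in>{0..t}. ann r ts (G i)) = ideal_I r ts"
    and adm_comax: "\<And>i j. i \<le> t \<Longrightarrow> j \<le> t \<Longrightarrow> i \<noteq> j \<Longrightarrow>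
        \<exists>u v. u \<in> ann r ts (G i) \<and> v \<in> ann r ts (G j) \<and> u + v - 1 \<in> ideal_I r ts"

context mt
begin

lemma top_ann': "a ^ (t - 1) * x = 0 \<longleftrightarrow> \<pi> x = 0"
  by (rule top_ann[OF max nilp hom ker])

lemma ann_a': "a * x = 0 \<Longrightarrow> \<exists>y. x = a ^ (t - 1) * y"
  by (rule ann_a[OF max nilp hom ker])

lemma AC: "y \<in> mpolys r \<Longrightarrow> (\<And>i. i \<le> t \<Longrightarrow> y * G i \<in> ideal_I r ts) \<Longrightarrow> y \<in> ideal_I r ts"
proof -
  assume y: "y \<in> mpolys r" and yG: "\<And>i. i \<le> t \<Longrightarrow> y * G i \<in> ideal_I r ts"
  have "y \<in> ann r ts (G i)" if "i \<in> {0..t}" for i using y yG[of i] that by (simp add: ann_mem)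
  then have "y \<in> (\<Inter>i\<in>{0..t}. ann r ts (G i))" by (rule INT_I)
  then show ?thesis using adm_inter by simp
qed

lemma prod_cong_G:
  assumes j: "j \<le> t" and S: "finite S"
    and F: "\<And>i. i \<in> S \<Longrightarrow> F i \<in> mpolys r \<and> F i * G j - G j \<in> ideal_I r ts"
  shows "prod F S * G j - G j \<in> ideal_I r ts"
  using S F
proof (induction S rule: finite_induct)
  case empty
  then show ?case by simp
next
  case (insert x S)
  have "prod F (insert x S) * G j - G j = F x * (prod F S * G j - G j) + (F x * G j - G j)"
    using insert.hyps by (simp add: algebra_simps)
  also have "\<dots> \<in> ideal_I r ts" using insert by (intro I_add I_mult) auto
  finally show ?case .
qed

lemma U_exists: "\<exists>u. \<forall>j\<le>t. u j \<in> mpolys r \<and> (\<forall>i\<le>t. i \<noteq> j \<longrightarrow> u j * G i \<in> ideal_I r ts)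
   \<and> u j * G j - G j \<in> ideal_I r ts"
proof -
  have "\<forall>j. \<exists>u. j \<le> t \<longrightarrow> u \<in> mpolys r \<and> (\<forall>i\<le>t. i \<noteq> j \<longrightarrow> u * G i \<in> ideal_I r ts)
   \<and> u * G j - G j \<in> ideal_I r ts"
  proof
    fix j
    show "\<exists>u. j \<le> t \<longrightarrow> u \<in> mpolys r \<and> (\<forall>i\<le>t. i \<noteq> j \<longrightarrow> u * G i \<in> ideal_I r ts)
      \<and> u * G j - G j \<in> ideal_I r ts"
    proof (cases "j \<le> t")
      case False
      then show ?thesis by blast
    next
      case jt: True
      have "\<forall>i. \<exists>f. i \<le> t \<and> i \<noteq> j \<longrightarrow> f \<in> mpolys r \<and> f * G i \<in> ideal_I r ts \<and> f * G j - G j \<in> ideal_I r ts"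
      proof
        fix i
        show "\<exists>f. i \<le> t \<and> i \<noteq> j \<longrightarrow> f \<in> mpolys r \<and> f * G i \<in> ideal_I r ts \<and> f * G j - G j \<in> ideal_I r ts"
        proof (cases "i \<le> t \<and> i \<noteq> j")
          case False
          then show ?thesis by blast
        next
          case True
          then obtain u v where uv: "u \<in> ann r ts (G i)" "v \<in> ann r ts (G j)" "u + v - 1 \<in> ideal_I r ts"
            using adm_comax[of i j] jt by blast
          have "u * G j - G j = (u + v - 1) * G j - v * G j" by (simp add: algebra_simps)
          also have "\<dots> \<in> ideal_I r ts"
            by (rule I_diff[OF I_mult2[OF G_in[OF jt] uv(3)]]) (use uv(2) in \<open>simp add: ann_mem\<close>)
          finally show ?thesis using uv by (auto simp: ann_mem)
        qed
      qed
      then obtain F where F: "\<And>i. i \<le> t \<and> i \<noteq> j \<Longrightarrow> F i \<in> mpolys r \<and> F i * G i \<in> ideal_I r ts \<and> F i * G j - G j \<in> ideal_I r ts"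
        by metis
      define u where "u = prod F ({0..t} - {j})"
      have "u \<in> mpolys r" unfolding u_def using F by (intro mpolys_prod) auto
      moreover have "\<forall>i\<le>t. i \<noteq> j \<longrightarrow> u * G i \<in> ideal_I r ts"
      proof (intro allI impI)
        fix i assume i: "i \<le> t" "i \<noteq> j"
        have "u = F i * prod F ({0..t} - {j} - {i})" unfolding u_def using i
          by (subst prod.remove[of _ i]) auto
        then have "u * G i = (F i * G i) * prod F ({0..t} - {j} - {i})" by (simp add: algebra_simps)
        also have "\<dots> \<in> ideal_I r ts" by (rule I_mult2[OF mpolys_prod]) (use F i in auto)
        finally show "u * G i \<in> ideal_I r ts" .
      qed
      moreover have "u * G j - G j \<in> ideal_I r ts"
        unfolding u_def using F by (intro prod_cong_G jt) auto
      ultimately show ?thesis by blast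
    qed
  qed
  then show ?thesis by metis
qed

lemma NF_eq_I: "A \<in> mpolys r \<Longrightarrow> B \<in> mpolys r \<Longrightarrow> NF r ts A = NF r ts B \<Longrightarrow> A - B \<in> ideal_I r ts"
proof -
  assume A: "A \<in> mpolys r" "B \<in> mpolys r" "NF r ts A = NF r ts B"
  have "A - B = (A - NF r ts A) - (B - NF r ts B)" using A(3) by simp
  also have "\<dots> \<in> ideal_I r ts" using A by (intro I_diff NF_cong monic) auto
  finally show ?thesis .
qed

lemma W_exists:
  assumes j: "j \<le> t" and uj: "uj \<in> mpolys r" and uG: "\<And>i. i \<le> t \<Longrightarrow> i \<noteq> j \<Longrightarrow> uj * G i \<in> ideal_I r ts"
  shows "\<exists>w\<in>mpolys r. uj - w * G j \<in> ideal_I r ts"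
proof -
  have Gj: "G j \<in> mpolys r" using G_in j by simp
  define f where "f n = NF r ts (uj * G j ^ n)" for n
  have "range f \<subseteq> {p. reduced r ts p}" unfolding f_def using NF_reduced monic by blast
  then have "finite (range f)" using finite_reduced finite_subset by blast
  then have "\<not> inj f" using finite_imageD infinite_UNIV_nat by blast
  then obtain x y where xy: "x \<noteq> y" "f x = f y" unfolding inj_def by blast
  obtain n n' where nn: "n < n'" "f n = f n'"
    using xy by (metis linorder_neqE_nat)
  define k where "k = n' - n"
  have k: "k \<ge> 1" "n' = k + n" using nn k_def by auto
  define x where "x = uj - uj * G j ^ k"
  have xM: "x \<in> mpolys r" unfolding x_def using uj Gj by simp
  have "x * G j ^ n = uj * G j ^ n - uj * G j ^ n'"
    unfolding x_def k(2) by (simp add: algebra_simps power_add)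
  also have "\<dots> \<in> ideal_I r ts" using nn(2) uj Gj unfolding f_def by (intro NF_eq_I) auto
  finally have xn: "x * G j ^ n \<in> ideal_I r ts" .
  have xGi: "x * G i \<in> ideal_I r ts" if "i \<le> t" "i \<noteq> j" for i
  proof -
    have "x * G i = (uj * G i) * (1 - G j ^ k)" unfolding x_def by (simp add: algebra_simps)
    also have "\<dots> \<in> ideal_I r ts" by (rule I_mult2[OF _ uG[OF that]]) (use Gj in simp)
    finally show ?thesis .
  qed
  have "\<forall>n. x * G j ^ n \<in> ideal_I r ts \<longrightarrow> x \<in> ideal_I r ts"
  proof
    fix n show "x * G j ^ n \<in> ideal_I r ts \<longrightarrow> x \<in> ideal_I r ts"
    proof (induction n)
      case 0
      then show ?case by simp
    next
      case (Suc n)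
      show ?case
      proof
        assume A: "x * G j ^ Suc n \<in> ideal_I r ts"
        have "x * G j ^ n \<in> ideal_I r ts"
        proof (rule AC)
          show "x * G j ^ n \<in> mpolys r" using xM Gj by simp
        next
          fix i assume i: "i \<le> t"
          show "x * G j ^ n * G i \<in> ideal_I r ts"
          proof (cases "i = j")
            case True
            have "x * G j ^ n * G i = x * G j ^ Suc n" using True by (simp add: power_Suc2 mult.assoc)
            then show ?thesis using A by simp
          next
            case False
            have "x * G j ^ n * G i = (x * G i) * G j ^ n" by (simp add: algebra_simps)
            also have "\<dots> \<in> ideal_I r ts" by (rule I_mult2[OF _ xGi[OF i False]]) (use Gj in simp)
            finally show ?thesis .
          qed
        qed
        then show "x \<in> ideal_I r ts" using Suc.IH by blast
      qed
    qed
  qed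
  then have "x \<in> ideal_I r ts" using xn by blast
  moreover have "uj - (uj * G j ^ (k - 1)) * G j = x"
  proof -
    have "G j ^ (k - 1) * G j = G j ^ k" using k(1) by (metis Suc_diff_1 less_le_trans power_Suc2 zero_less_one)
    then show ?thesis unfolding x_def by (simp add: mult.assoc)
  qed
  moreover have "uj * G j ^ (k - 1) \<in> mpolys r" using uj Gj by simp
  ultimately show ?thesis by metis
qed

lemma F_lemma:
  assumes z: "z \<in> mpolys r" and cz: "const_mpoly (a ^ (t - 1)) * z \<in> ideal_I r ts"
  shows "Poly_Mapping.map \<pi> z \<in> ideal_I r (\<lambda>k. map_poly \<pi> (ts k))"
proof -
  have "const_mpoly (a ^ (t - 1)) * NF r ts z = 0"
    using NF_I[OF monic cz] by (simp add: NF_cm[symmetric])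
  then have "\<forall>m. a ^ (t - 1) * Poly_Mapping.lookup (NF r ts z) m = 0" by (simp add: cm_zero_iff)
  then have N0: "Poly_Mapping.map \<pi> (NF r ts z) = 0"
    by (intro poly_mapping_eqI) (simp add: lookup_mapp[OF hom] top_ann'[symmetric])
  have "Poly_Mapping.map \<pi> z = Poly_Mapping.map \<pi> (z - NF r ts z)"
    by (simp add: map_diff[OF hom] N0)
  also have "\<dots> \<in> ideal_I r (\<lambda>k. map_poly \<pi> (ts k))"
    by (intro map_I[OF hom] NF_cong[OF monic] z) auto
  finally show ?thesis .
qed

end

context mt
begin

abbreviation "tsf \<equiv> (\<lambda>k. map_poly \<pi> (ts k))"
abbreviation "Kc \<equiv> gen_code r ts t (\<lambda>i. const_mpoly (a ^ (i - 1)) * G i)"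
abbreviation "Lc \<equiv> gen_code r tsf t (\<lambda>i. Poly_Mapping.map \<pi> (G i))"

lemma top_ann_S: "a ^ (t - Suc 0) * x = 0 \<longleftrightarrow> \<pi> x = 0"
  using top_ann' by simp

lemma deg_eq: "k < r \<Longrightarrow> degree (ts k) = degree (tsf k)"
proof -
  assume k: "k < r"
  have "coeff (tsf k) (degree (ts k)) = \<pi> 1"
    using monic[OF k] by (simp add: coeff_map_poly h_zero[OF hom])
  then have "coeff (tsf k) (degree (ts k)) \<noteq> 0" by (simp add: h_one[OF hom])
  then have "degree (ts k) \<le> degree (tsf k)" by (rule le_degree)
  moreover have "degree (tsf k) \<le> degree (ts k)" by (rule map_poly_degree_leq)
  ultimately show ?thesis by simp
qed

lemma KL:
  assumes Y: "Y \<in> mpolys r" and cY: "const_mpoly (a ^ (t - 1)) * Y \<in> Kc"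
  shows "Poly_Mapping.map \<pi> Y \<in> Lc"
proof -
  obtain u where u: "\<forall>j\<le>t. u j \<in> mpolys r \<and> (\<forall>i\<le>t. i \<noteq> j \<longrightarrow> u j * G i \<in> ideal_I r ts) \<and> u j * G j - G j \<in> ideal_I r ts"
    using U_exists by blast
  have uM: "\<And>j. j \<le> t \<Longrightarrow> u j \<in> mpolys r"
    and uG: "\<And>i j. i \<le> t \<Longrightarrow> j \<le> t \<Longrightarrow> i \<noteq> j \<Longrightarrow> u j * G i \<in> ideal_I r ts"
    and uGj: "\<And>j. j \<le> t \<Longrightarrow> u j * G j - G j \<in> ideal_I r ts" using u by auto
  obtain h \<iota> where h: "\<forall>i. h i \<in> mpolys r" "\<iota> \<in> ideal_I r ts"
    "const_mpoly (a ^ (t - 1)) * Y = (\<Sum>i\<in>{1..t}. h i * (const_mpoly (a ^ (i - 1)) * G i)) + \<iota>"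
    using cY unfolding GC_mem by blast
  have "const_mpoly (a ^ (t - 1)) * (u 0 * Y) = u 0 * (const_mpoly (a ^ (t - 1)) * Y)" by (simp add: algebra_simps)
  also have "\<dots> = (\<Sum>i\<in>{1..t}. (h i * const_mpoly (a ^ (i - 1))) * (u 0 * G i)) + u 0 * \<iota>"
    unfolding h(3) by (simp add: algebra_simps sum_distrib_left)
  also have "\<dots> \<in> ideal_I r ts"
  proof (rule I_add)
    show "(\<Sum>i\<in>{1..t}. (h i * const_mpoly (a ^ (i - 1))) * (u 0 * G i)) \<in> ideal_I r ts"
    proof (rule I_sum)
      fix i assume i: "i \<in> {1..t}"
      show "(h i * const_mpoly (a ^ (i - 1))) * (u 0 * G i) \<in> ideal_I r ts"
        by (rule I_mult) (use h(1) uG[of i 0] i in auto)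
    qed
    show "u 0 * \<iota> \<in> ideal_I r ts" by (rule I_mult[OF uM h(2)]) simp
  qed
  finally have c0: "const_mpoly (a ^ (t - 1)) * (u 0 * Y) \<in> ideal_I r ts" .
  have P0: "Poly_Mapping.map \<pi> (u 0 * Y) \<in> ideal_I r tsf"
    by (rule F_lemma[OF _ c0]) (use uM Y in simp)
  have Pj: "Poly_Mapping.map \<pi> (u j * Y) \<in> Lc" if j: "j \<in> {1..t}" for j
  proof -
    obtain w where w: "w \<in> mpolys r" "u j - w * G j \<in> ideal_I r ts"
      using W_exists[of j "u j"] j uM uG by auto
    have "u j * Y = (w * Y) * G j + (u j - w * G j) * Y" by (simp add: algebra_simps)
    then have "Poly_Mapping.map \<pi> (u j * Y) = Poly_Mapping.map \<pi> (w * Y) * Poly_Mapping.map \<pi> (G j) + Poly_Mapping.map \<pi> ((u j - w * G j) * Y)"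
      by (simp add: map_add[OF hom] map_mult[OF hom])
    also have "\<dots> \<in> Lc"
    proof (rule GC_add)
      show "Poly_Mapping.map \<pi> (w * Y) * Poly_Mapping.map \<pi> (G j) \<in> Lc"
        by (rule GC_gen[OF j]) (rule map_mpolys[OF hom], use w Y in simp)
      show "Poly_Mapping.map \<pi> ((u j - w * G j) * Y) \<in> Lc"
        by (rule GC_I, rule map_I[OF hom], rule I_mult2[OF Y w(2)])
    qed
    finally show ?thesis .
  qed
  define e where "e = (\<Sum>j\<in>{0..t}. u j) - 1"
  have eI: "e \<in> ideal_I r ts"
  proof (rule AC)
    show "e \<in> mpolys r" unfolding e_def using uM by (intro mpolys_diff mpolys_sum mpolys_1) auto
  next
    fix i assume i: "i \<le> t"
    have "(\<Sum>j\<in>{0..t}. u j) = u i + (\<Sum>j\<in>{0..t}-{i}. u j)" using i by (subst sum.remove[of _ i]) auto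
    then have "e * G i = (u i * G i - G i) + (\<Sum>j\<in>{0..t}-{i}. u j * G i)"
      unfolding e_def by (simp add: algebra_simps sum_distrib_right sum_distrib_left)
    also have "\<dots> \<in> ideal_I r ts"
    proof (rule I_add)
      show "u i * G i - G i \<in> ideal_I r ts" by (rule uGj[OF i])
      show "(\<Sum>j\<in>{0..t}-{i}. u j * G i) \<in> ideal_I r ts"
        by (rule I_sum) (use uG i in auto)
    qed
    finally show "e * G i \<in> ideal_I r ts" .
  qed
  have eqY: "Y = (\<Sum>j\<in>{0..t}. u j * Y) - e * Y" unfolding e_def by (simp add: algebra_simps sum_distrib_right sum_distrib_left)
  have "Poly_Mapping.map \<pi> Y = Poly_Mapping.map \<pi> ((\<Sum>j\<in>{0..t}. u j * Y) - e * Y)"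
    using eqY by (rule arg_cong)
  also have "\<dots> = (\<Sum>j\<in>{0..t}. Poly_Mapping.map \<pi> (u j * Y)) - Poly_Mapping.map \<pi> (e * Y)"
    by (simp add: map_diff[OF hom] map_sum[OF hom])
  also have "(\<Sum>j\<in>{0..t}. Poly_Mapping.map \<pi> (u j * Y)) = Poly_Mapping.map \<pi> (u 0 * Y) + (\<Sum>j\<in>{1..t}. Poly_Mapping.map \<pi> (u j * Y))"
  proof -
    have "{0..t} = insert 0 {1..t}" by auto
    then show ?thesis by simp
  qed
  also have "Poly_Mapping.map \<pi> (u 0 * Y) + (\<Sum>j\<in>{1..t}. Poly_Mapping.map \<pi> (u j * Y)) - Poly_Mapping.map \<pi> (e * Y) \<in> Lc"
  proof (rule GC_diff[OF GC_add])
    show "Poly_Mapping.map \<pi> (u 0 * Y) \<in> Lc" by (rule GC_I[OF P0])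
    show "(\<Sum>j\<in>{1..t}. Poly_Mapping.map \<pi> (u j * Y)) \<in> Lc" by (rule GC_sum[OF Pj])
    show "Poly_Mapping.map \<pi> (e * Y) \<in> Lc" by (rule GC_I, rule map_I[OF hom], rule I_mult2[OF Y eI])
  qed
  finally show ?thesis .
qed

lemma partA:
  assumes p: "p \<in> Lc" "reduced r tsf p" "p \<noteq> 0"
  shows "\<exists>P. P \<in> Kc \<and> P \<noteq> 0 \<and> reduced r ts P \<and> hweight P = hweight p"
proof -
  define \<sigma> where "\<sigma> y = (SOME x. \<pi> x = y)" for y
  have \<pi>\<sigma>: "\<pi> (\<sigma> y) = y" for y
  proof -
    have "\<exists>x. \<pi> x = y" using surj by (metis surjD)
    then show ?thesis unfolding \<sigma>_def by (rule someI_ex)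
  qed
  have \<pi>0: "\<pi> 0 = 0" by (rule h_zero[OF hom])
  define lift where "lift q = Poly_Mapping.map \<sigma> q" for q :: "'f mpoly"
  have lift_look: "Poly_Mapping.lookup (lift q) m = (if Poly_Mapping.lookup q m = 0 then 0 else \<sigma> (Poly_Mapping.lookup q m))" for q m
    by (simp add: lift_def lookup_map_gen)
  have \<sigma>nz: "\<sigma> y \<noteq> 0" if "y \<noteq> 0" for y using \<pi>\<sigma>[of y] \<pi>0 that by metis
  have keys_lift: "Poly_Mapping.keys (lift q) = Poly_Mapping.keys q" for q
    by (auto simp: in_keys_iff lift_look \<sigma>nz)
  have map_lift: "Poly_Mapping.map \<pi> (lift q) = q" for q
    by (rule poly_mapping_eqI) (simp add: lookup_mapp[OF hom] lift_look \<pi>\<sigma> \<pi>0)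
  have lift_M: "lift q \<in> mpolys r" if "q \<in> mpolys r" for q using that by (simp add: mpolys_iff keys_lift)
  obtain h \<iota> where h: "\<forall>i. h i \<in> mpolys r" "\<iota> \<in> ideal_I r tsf" "p = (\<Sum>i\<in>{1..t}. h i * Poly_Mapping.map \<pi> (G i)) + \<iota>"
    using p(1) unfolding GC_mem by blast
  obtain g where g: "\<forall>k. g k \<in> mpolys r" "\<iota> = (\<Sum>k<r. g k * uni_to_mpoly k (tsf k))"
    using h(2) unfolding I_mem by blast
  define \<iota>' where "\<iota>' = (\<Sum>k<r. lift (g k) * uni_to_mpoly k (ts k))"
  have \<iota>'I: "\<iota>' \<in> ideal_I r ts" unfolding \<iota>'_def I_mem
    by (intro exI[of _ "\<lambda>k. lift (g k)"]) (use g lift_M in auto)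
  have map_\<iota>': "Poly_Mapping.map \<pi> \<iota>' = \<iota>" unfolding \<iota>'_def g(2)
    by (simp add: map_sum[OF hom] map_mult[OF hom] map_uni[OF hom] map_lift)
  define P where "P = lift p"
  define D where "D = P - (\<Sum>i\<in>{1..t}. lift (h i) * G i) - \<iota>'"
  have "Poly_Mapping.map \<pi> D = 0" unfolding D_def P_def
    by (simp add: map_diff[OF hom] map_sum[OF hom] map_mult[OF hom] map_lift map_\<iota>' h(3))
  then have "\<pi> (Poly_Mapping.lookup D m) = 0" for m
    by (metis lookup_mapp[OF hom] lookup_zero)
  then have "\<forall>m. a ^ (t - 1) * Poly_Mapping.lookup D m = 0" using top_ann' by blast
  then have cD: "const_mpoly (a ^ (t - 1)) * D = 0" unfolding cm_zero_iff .
  define P' where "P' = const_mpoly (a ^ (t - 1)) * P"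
  have P'eq: "P' = (\<Sum>i\<in>{1..t}. (const_mpoly (a ^ (t - i)) * lift (h i)) * (const_mpoly (a ^ (i - 1)) * G i)) + const_mpoly (a ^ (t - 1)) * \<iota>'"
  proof -
    have "P' = const_mpoly (a ^ (t - 1)) * D + (\<Sum>i\<in>{1..t}. const_mpoly (a ^ (t - 1)) * (lift (h i) * G i)) + const_mpoly (a ^ (t - 1)) * \<iota>'"
      unfolding P'_def D_def by (simp add: algebra_simps sum_distrib_left)
    also have "(\<Sum>i\<in>{1..t}. const_mpoly (a ^ (t - 1)) * (lift (h i) * G i)) = (\<Sum>i\<in>{1..t}. (const_mpoly (a ^ (t - i)) * lift (h i)) * (const_mpoly (a ^ (i - 1)) * G i))"
    proof (rule sum.cong[OF refl])
      fix i assume i: "i \<in> {1..t}"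
      then have "t - 1 = (t - i) + (i - 1)" by auto
      then have "a ^ (t - 1) = a ^ (t - i) * a ^ (i - 1)" by (metis power_add)
      then have "const_mpoly (a ^ (t - 1)) = const_mpoly (a ^ (t - i)) * const_mpoly (a ^ (i - 1))" by (simp add: cm_mult)
      then show "const_mpoly (a ^ (t - 1)) * (lift (h i) * G i) = (const_mpoly (a ^ (t - i)) * lift (h i)) * (const_mpoly (a ^ (i - 1)) * G i)"
        by (simp add: algebra_simps)
    qed
    finally show ?thesis using cD by simp
  qed
  have P'K: "P' \<in> Kc" unfolding GC_mem
    by (intro exI[of _ "\<lambda>i. const_mpoly (a ^ (t - i)) * lift (h i)"] exI[of _ "const_mpoly (a ^ (t - 1)) * \<iota>'"] conjI allI P'eq)
       (use h(1) lift_M \<iota>'I in \<open>auto intro: I_mult\<close>)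
  have keysP': "Poly_Mapping.keys P' = Poly_Mapping.keys p"
  proof -
    have "Poly_Mapping.lookup P' m \<noteq> 0 \<longleftrightarrow> Poly_Mapping.lookup p m \<noteq> 0" for m
      by (cases "Poly_Mapping.lookup p m = 0") (simp_all add: P'_def P_def lookup_cm lift_look top_ann' top_ann_S \<pi>\<sigma>)
    note eq = this
    show ?thesis by (intro set_eqI) (simp only: in_keys_iff eq)
  qed
  have "reduced r ts P'" using p(2) reduced_cong[OF keysP' deg_eq] by simp
  moreover have "P' \<noteq> 0" using keysP' p(3) by (metis keys_eq_empty)
  moreover have "hweight P' = hweight p" by (simp add: hweight_def keysP')
  ultimately show ?thesis using P'K by blast
qed

lemma partB:
  assumes c: "c \<in> Kc" "reduced r ts c" "c \<noteq> 0"
  shows "\<exists>p. p \<in> Lc \<and> p \<noteq> 0 \<and> reduced r tsf p \<and> hweight p \<le> hweight c"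
proof -
  define S where "S = {s. const_mpoly (a ^ s) * c \<noteq> 0}"
  have "0 \<in> S" using c(3) by (simp add: S_def)
  have Sb: "S \<subseteq> {..<t}"
  proof
    fix s assume s: "s \<in> S"
    show "s \<in> {..<t}"
    proof (rule ccontr)
      assume "s \<notin> {..<t}"
      then have "a ^ s = a ^ t * a ^ (s - t)" by (simp add: power_add[symmetric])
      then have "a ^ s = 0" using nilp by simp
      then show False using s by (simp add: S_def)
    qed
  qed
  then have finS: "finite S" by (rule finite_subset) simp
  define s0 where "s0 = Max S"
  have s0S: "s0 \<in> S" unfolding s0_def using finS \<open>0 \<in> S\<close> by (intro Max_in) auto
  have "Suc s0 \<notin> S"
  proof
    assume "Suc s0 \<in> S"
    then have "Suc s0 \<le> s0" unfolding s0_def by (rule Max_ge[OF finS])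
    then show False by simp
  qed
  then have cS: "const_mpoly (a ^ Suc s0) * c = 0" by (simp add: S_def)
  define c' where "c' = const_mpoly (a ^ s0) * c"
  have c'0: "c' \<noteq> 0" using s0S by (simp add: S_def c'_def)
  have ac': "a * Poly_Mapping.lookup c' m = 0" for m
  proof -
    have "a ^ Suc s0 * Poly_Mapping.lookup c m = 0" using cS by (simp add: cm_zero_iff)
    then show ?thesis by (simp add: c'_def lookup_cm mult.assoc)
  qed
  have c'K: "c' \<in> Kc" unfolding c'_def by (rule GC_mult[OF mpolys_cm c(1)])
  have keys_c': "Poly_Mapping.keys c' \<subseteq> Poly_Mapping.keys c" by (simp add: c'_def keys_cm)
  have red': "reduced r ts c'" by (rule reduced_mono[OF keys_c' c(2)])
  define \<tau> where "\<tau> x = (SOME y. x = a ^ (t - 1) * y)" for x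
  have \<tau>: "x = a ^ (t - 1) * \<tau> x" if "a * x = 0" for x
  proof -
    have "\<exists>y. x = a ^ (t - 1) * y" using ann_a'[OF that] .
    then show ?thesis unfolding \<tau>_def by (rule someI_ex)
  qed
  define Y where "Y = Poly_Mapping.map \<tau> c'"
  have Ylook: "a ^ (t - 1) * Poly_Mapping.lookup Y m = Poly_Mapping.lookup c' m" for m
    using \<tau>[OF ac'[of m]] by (simp add: Y_def lookup_map_gen)
  have cY: "const_mpoly (a ^ (t - 1)) * Y = c'"
    by (rule poly_mapping_eqI) (simp only: lookup_cm Ylook)
  have keysY: "Poly_Mapping.keys Y \<subseteq> Poly_Mapping.keys c'"
    by (auto simp: Y_def in_keys_iff lookup_map_gen)
  have YM: "Y \<in> mpolys r" using reduced_mpolys[OF red'] keysY by (auto simp: mpolys_iff)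
  define p where "p = Poly_Mapping.map \<pi> Y"
  have keys_p: "Poly_Mapping.keys p = Poly_Mapping.keys c'"
  proof -
    have "\<pi> (Poly_Mapping.lookup Y m) = 0 \<longleftrightarrow> Poly_Mapping.lookup c' m = 0" for m
      using top_ann'[of "Poly_Mapping.lookup Y m"] Ylook[of m] by simp
    note eq = this
    have lp: "Poly_Mapping.lookup p m = \<pi> (Poly_Mapping.lookup Y m)" for m by (simp add: p_def lookup_mapp[OF hom])
    show ?thesis
    proof (rule set_eqI)
      fix m
      have "m \<in> Poly_Mapping.keys p \<longleftrightarrow> \<pi> (Poly_Mapping.lookup Y m) \<noteq> 0" by (simp only: in_keys_iff lp)
      also have "\<dots> \<longleftrightarrow> Poly_Mapping.lookup c' m \<noteq> 0" using eq[of m] by blast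
      also have "\<dots> \<longleftrightarrow> m \<in> Poly_Mapping.keys c'" by (simp only: in_keys_iff)
      finally show "m \<in> Poly_Mapping.keys p \<longleftrightarrow> m \<in> Poly_Mapping.keys c'" .
    qed
  qed
  have "p \<in> Lc" unfolding p_def by (rule KL[OF YM]) (unfold cY, rule c'K)
  moreover have "p \<noteq> 0" using keys_p c'0 by (metis keys_eq_empty)
  moreover have "reduced r tsf p" using red' reduced_cong[OF keys_p, of r tsf ts] deg_eq by simp
  moreover have "hweight p \<le> hweight c" unfolding hweight_def keys_p
    by (rule card_mono[OF finite_keys keys_c'])
  ultimately show ?thesis by blast
qed

lemma main: "min_dist r ts Kc = min_dist r tsf Lc"
  unfolding min_dist_def Let_def
proof (rule min_eq)
  show "finite {hweight p |p. p \<in> Kc \<and> p \<noteq> 0 \<and> reduced r ts p}"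
    by (rule finite_subset[of _ "{..card {m::nat \<Rightarrow>\<^sub>0 nat. Poly_Mapping.keys m \<subseteq> {..<r} \<and> (\<forall>k<r. Poly_Mapping.lookup m k < degree (ts k))}}"])
       (auto dest: hweight_bound)
  show "finite {hweight p |p. p \<in> Lc \<and> p \<noteq> 0 \<and> reduced r tsf p}"
    by (rule finite_subset[of _ "{..card {m::nat \<Rightarrow>\<^sub>0 nat. Poly_Mapping.keys m \<subseteq> {..<r} \<and> (\<forall>k<r. Poly_Mapping.lookup m k < degree (tsf k))}}"])
       (auto dest: hweight_bound)
  show "\<forall>x\<in>{hweight p |p. p \<in> Kc \<and> p \<noteq> 0 \<and> reduced r ts p}. \<exists>y\<in>{hweight p |p. p \<in> Lc \<and> p \<noteq> 0 \<and> reduced r tsf p}. y \<le> x"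
  proof
    fix x assume "x \<in> {hweight p |p. p \<in> Kc \<and> p \<noteq> 0 \<and> reduced r ts p}"
    then obtain c where c: "x = hweight c" "c \<in> Kc" "c \<noteq> 0" "reduced r ts c" by blast
    then obtain p where p: "p \<in> Lc" "p \<noteq> 0" "reduced r tsf p" "hweight p \<le> hweight c"
      using partB by blast
    then have "hweight p \<in> {hweight p |p. p \<in> Lc \<and> p \<noteq> 0 \<and> reduced r tsf p}" by blast
    then show "\<exists>y\<in>{hweight p |p. p \<in> Lc \<and> p \<noteq> 0 \<and> reduced r tsf p}. y \<le> x"
      using p(4) c(1) by (intro bexI[of _ "hweight p"]) simp_all
  qed
  show "\<forall>y\<in>{hweight p |p. p \<in> Lc \<and> p \<noteq> 0 \<and> reduced r tsf p}. \<exists>x\<in>{hweight p |p. p \<in> Kc \<and> p \<noteq> 0 \<and> reduced r ts p}. x \<le> y"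
  proof
    fix x assume "x \<in> {hweight p |p. p \<in> Lc \<and> p \<noteq> 0 \<and> reduced r tsf p}"
    then obtain c where c: "x = hweight c" "c \<in> Lc" "c \<noteq> 0" "reduced r tsf c" by blast
    then obtain p where p: "p \<in> Kc" "p \<noteq> 0" "reduced r ts p" "hweight p = hweight c"
      using partA by blast
    then have "hweight p \<in> {hweight p |p. p \<in> Kc \<and> p \<noteq> 0 \<and> reduced r ts p}" by blast
    then show "\<exists>y\<in>{hweight p |p. p \<in> Kc \<and> p \<noteq> 0 \<and> reduced r ts p}. y \<le> x"
      using p(4) c(1) by (intro bexI[of _ "hweight p"]) simp_all
  qed
qed

end

theorem mainTheorem7:
  fixes a :: "'r::{comm_ring_1, finite}"
    and t :: nat
    and \<pi> :: "'r \<Rightarrow> 'f::field"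
    and r :: nat
    and ts :: "nat \<Rightarrow> 'r poly"
    and G :: "nat \<Rightarrow> 'r mpoly"
    and K :: "'r mpoly set"
  assumes chain: "chain_ring TYPE('r)"
    and max: "maximal_ideal (principal a)"
    and nilp: "t \<ge> 1" "a ^ t = 0" "a ^ (t - 1) \<noteq> 0"
    and residue: "ring_hom_cl \<pi>" "surj \<pi>" "{x. \<pi> x = 0} = principal a"
    and monic: "\<And>k. k < r \<Longrightarrow> lead_coeff (ts k) = 1"
    and sqfree: "\<And>k. k < r \<Longrightarrow> squarefree (map_poly \<pi> (ts k))"
    and G_in: "\<And>i. i \<le> t \<Longrightarrow> G i \<in> mpolys r"
    and adm_inter: "(\<Inter>i\<in>{0..t}. ann r ts (G i)) = ideal_I r ts"
    and adm_comax: "\<And>i j. i \<le> t \<Longrightarrow> j \<le> t \<Longrightarrow> i \<noteq> j \<Longrightarrow>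
        \<exists>u v. u \<in> ann r ts (G i) \<and> v \<in> ann r ts (G j) \<and> u + v - 1 \<in> ideal_I r ts"
    and K_def: "K = gen_code r ts t (\<lambda>i. const_mpoly (a ^ (i - 1)) * G i)"
  shows "min_dist r ts K =
         min_dist r (\<lambda>k. map_poly \<pi> (ts k))
           (gen_code r (\<lambda>k. map_poly \<pi> (ts k)) t (\<lambda>i. Poly_Mapping.map \<pi> (G i)))"
proof -
  interpret mt a t \<pi> r ts G
    by (rule mt.intro[OF max nilp residue monic G_in adm_inter adm_comax])
  show ?thesis unfolding K_def by (rule main)
qed

end
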